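(* Let $\varphi(z)=az+b$, where $a,b\in\mathbb{C}$ and $|a|\le 1$, and let $C_\varphi f=f\circ\varphi$ be the composition operator on $\mathcal{F}^2$. Then each of the following holds: $C_\varphi$ is a bounded normaloid operator on $\mathcal{F}^2$ if and only if $b=0$; $C_\varphi$ is a bounded hyponormal operator on $\mathcal{F}^2$ if and only if $b=0$; $C_\varphi$ is a bounded cohyponormal operator on $\mathcal{F}^2$ if and only if $b=0$.
   Context: $\mathcal{F}^2$ is the Fock space: the Hilbert space of entire functions $f$ on $\mathbb{C}$ with $\int_{\mathbb{C}}|f(z)|^2\,d\mu(z)<\infty$, where $d\mu(z)=\pi^{-1}e^{-|z|^2}\,dA(z)$, with inner product $\langle f,g\rangle=\int f\overline{g}\,d\mu$. A bounded operator $T$ on a Hilbert space is normaloid if $\|T\|=r(T)$ (the spectral radius), hyponormal if $T^*T\ge TT^*$, and cohyponormal if $T^*T\le TT^*$. *)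

theory Defs
  imports "HOL-Analysis.Analysis"
begin

text \<open>Gaussian weight of the Fock measure: d mu(z) = pi^{-1} exp(-|z|^2) dA(z);
  dA is Lebesgue area measure, i.e. lborel on the complex plane.\<close>
definition fock_weight :: "complex \<Rightarrow> real" where
  "fock_weight z = exp (- (cmod z)\<^sup>2) / pi"

definition fock_space :: "(complex \<Rightarrow> complex) set" where
  "fock_space = {f. f holomorphic_on UNIV \<and>
      integrable lborel (\<lambda>z. (cmod (f z))\<^sup>2 * fock_weight z)}"

definition fock_inner :: "(complex \<Rightarrow> complex) \<Rightarrow> (complex \<Rightarrow> complex) \<Rightarrow> complex" where
  "fock_inner f g = integral\<^sup>L lborel (\<lambda>z. f z * cnj (g z) * complex_of_real (fock_weight z))"

definition fock_norm :: "(complex \<Rightarrow> complex) \<Rightarrow> real" where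
  "fock_norm f = sqrt (integral\<^sup>L lborel (\<lambda>z. (cmod (f z))\<^sup>2 * fock_weight z))"

type_synonym fock_op = "(complex \<Rightarrow> complex) \<Rightarrow> (complex \<Rightarrow> complex)"

text \<open>Bounded (linear) operator on F^2; only its action on F^2 matters.\<close>
definition fock_bounded :: "fock_op \<Rightarrow> bool" where
  "fock_bounded T \<longleftrightarrow>
     (\<forall>f\<in>fock_space. T f \<in> fock_space) \<and>
     (\<forall>f\<in>fock_space. \<forall>g\<in>fock_space. T (\<lambda>z. f z + g z) = (\<lambda>z. T f z + T g z)) \<and>
     (\<forall>f\<in>fock_space. \<forall>c. T (\<lambda>z. c * f z) = (\<lambda>z. c * T f z)) \<and>
     (\<exists>K. \<forall>f\<in>fock_space. fock_norm (T f) \<le> K * fock_norm f)"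

definition fock_opnorm :: "fock_op \<Rightarrow> real" where
  "fock_opnorm T = Sup {fock_norm (T f) | f. f \<in> fock_space \<and> fock_norm f \<le> 1}"

definition fock_invertible :: "fock_op \<Rightarrow> bool" where
  "fock_invertible A \<longleftrightarrow>
     (\<exists>S. fock_bounded S \<and> (\<forall>f\<in>fock_space. S (A f) = f \<and> A (S f) = f))"

definition fock_spectrum :: "fock_op \<Rightarrow> complex set" where
  "fock_spectrum T = {c. \<not> fock_invertible (\<lambda>f z. T f z - c * f z)}"

definition fock_spectral_radius :: "fock_op \<Rightarrow> real" where
  "fock_spectral_radius T = Sup (cmod ` fock_spectrum T)"

definition normaloid :: "fock_op \<Rightarrow> bool" where
  "normaloid T \<longleftrightarrow> fock_opnorm T = fock_spectral_radius T"

definition fock_adjoint :: "fock_op \<Rightarrow> fock_op \<Rightarrow> bool" where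
  "fock_adjoint T S \<longleftrightarrow> (\<forall>f\<in>fock_space. S f \<in> fock_space) \<and>
     (\<forall>f\<in>fock_space. \<forall>g\<in>fock_space. fock_inner (T f) g = fock_inner f (S g))"

definition fock_positive :: "fock_op \<Rightarrow> bool" where
  "fock_positive A \<longleftrightarrow> (\<forall>f\<in>fock_space. fock_inner (A f) f \<in> \<real> \<and> 0 \<le> Re (fock_inner (A f) f))"

definition hyponormal :: "fock_op \<Rightarrow> bool" where
  "hyponormal T \<longleftrightarrow> (\<exists>S. fock_adjoint T S \<and>
      fock_positive (\<lambda>f z. S (T f) z - T (S f) z))"

definition cohyponormal :: "fock_op \<Rightarrow> bool" where
  "cohyponormal T \<longleftrightarrow> (\<exists>S. fock_adjoint T S \<and>
      fock_positive (\<lambda>f z. T (S f) z - S (T f) z))"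

definition comp_op :: "(complex \<Rightarrow> complex) \<Rightarrow> fock_op" where
  "comp_op \<phi> f = (\<lambda>z. f (\<phi> z))"

end

theory Submission
  imports Defs "HOL-Complex_Analysis.Complex_Analysis" "HOL-Probability.Distributions"
begin

lemma measurable_Complex_pair[measurable]:
  "(\<lambda>(x,y). Complex x y) \<in> borel_measurable (borel \<Otimes>\<^sub>M borel)"
proof -
  have "(\<lambda>p::real\<times>real. Complex (fst p) (snd p)) = (\<lambda>p. complex_of_real (fst p) + \<i> * complex_of_real (snd p))"
    by (auto simp: Complex_eq)
  moreover have "(\<lambda>p::real\<times>real. complex_of_real (fst p) + \<i> * complex_of_real (snd p)) \<in> borel_measurable (borel \<Otimes>\<^sub>M borel)"
    by measurable
  ultimately show ?thesis by (simp add: case_prod_beta')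
qed

lemma lborel_complex:
  "(lborel :: complex measure) = distr (lborel \<Otimes>\<^sub>M lborel) borel (\<lambda>(x,y). Complex x y)"
proof (rule lborel_eqI)
  fix l u :: complex
  assume lu: "\<And>b. b \<in> Basis \<Longrightarrow> l \<bullet> b \<le> u \<bullet> b"
  have le1: "Re l \<le> Re u" using lu[of 1] by (simp add: Basis_complex_def inner_complex_def)
  have le2: "Im l \<le> Im u" using lu[of \<i>] by (simp add: Basis_complex_def inner_complex_def)
  have pre: "(\<lambda>(x,y). Complex x y) -` box l u \<inter> space (lborel \<Otimes>\<^sub>M lborel) = {Re l<..<Re u} \<times> {Im l<..<Im u}"
    by (auto simp: box_def Basis_complex_def inner_complex_def space_pair_measure)
  have "emeasure (distr (lborel \<Otimes>\<^sub>M lborel) borel (\<lambda>(x,y). Complex x y)) (box l u)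
      = emeasure (lborel \<Otimes>\<^sub>M lborel) ({Re l<..<Re u} \<times> {Im l<..<Im u})"
    by (subst emeasure_distr) (auto simp: pre)
  also have "\<dots> = ennreal ((Re u - Re l) * (Im u - Im l))"
    using le1 le2 by (simp add: lborel.emeasure_pair_measure_Times ennreal_mult)
  also have "(Re u - Re l) * (Im u - Im l) = (\<Prod>b\<in>Basis. (u - l) \<bullet> b)"
    by (simp add: Basis_complex_def inner_complex_def)
  finally show "emeasure (distr (lborel \<Otimes>\<^sub>M lborel) borel (\<lambda>(x,y). Complex x y)) (box l u) = (\<Prod>b\<in>Basis. (u - l) \<bullet> b)" .
qed simp

lemma nn_integral_complex_xy:
  fixes f :: "complex \<Rightarrow> ennreal"
  assumes [measurable]: "f \<in> borel_measurable borel"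
  shows "(\<integral>\<^sup>+z. f z \<partial>lborel) = (\<integral>\<^sup>+x. (\<integral>\<^sup>+y. f (Complex x y) \<partial>lborel) \<partial>lborel)"
proof -
  have "(\<integral>\<^sup>+z. f z \<partial>lborel) = (\<integral>\<^sup>+p. f (case p of (x,y) \<Rightarrow> Complex x y) \<partial>(lborel \<Otimes>\<^sub>M lborel))"
    by (subst lborel_complex) (simp add: nn_integral_distr)
  also have "\<dots> = (\<integral>\<^sup>+x. (\<integral>\<^sup>+y. f (Complex x y) \<partial>lborel) \<partial>lborel)"
    by (subst lborel.nn_integral_fst[symmetric]) auto
  finally show ?thesis .
qed

lemma nn_integral_complex_yx:
  fixes f :: "complex \<Rightarrow> ennreal"
  assumes [measurable]: "f \<in> borel_measurable borel"
  shows "(\<integral>\<^sup>+z. f z \<partial>lborel) = (\<integral>\<^sup>+y. (\<integral>\<^sup>+x. f (Complex x y) \<partial>lborel) \<partial>lborel)"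
proof -
  have "(\<integral>\<^sup>+z. f z \<partial>lborel) = (\<integral>\<^sup>+p. f (case p of (x,y) \<Rightarrow> Complex x y) \<partial>(lborel \<Otimes>\<^sub>M lborel))"
    by (subst lborel_complex) (simp add: nn_integral_distr)
  also have "\<dots> = (\<integral>\<^sup>+y. (\<integral>\<^sup>+x. f (Complex x y) \<partial>lborel) \<partial>lborel)"
    by (subst lborel_pair.nn_integral_snd[symmetric]) auto
  finally show ?thesis .
qed

definition shearX :: "real \<Rightarrow> complex \<Rightarrow> complex" where
  "shearX t z = Complex (Re z + t * Im z) (Im z)"
definition shearY :: "real \<Rightarrow> complex \<Rightarrow> complex" where
  "shearY t z = Complex (Re z) (Im z + t * Re z)"

lemma shearX_measurable[measurable]: "shearX t \<in> borel_measurable borel"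
proof -
  have "shearX t = (\<lambda>z. complex_of_real (Re z + t * Im z) + \<i> * complex_of_real (Im z))"
    by (auto simp: shearX_def Complex_eq fun_eq_iff)
  also have "\<dots> \<in> borel_measurable borel" by measurable
  finally show ?thesis .
qed

lemma shearY_measurable[measurable]: "shearY t \<in> borel_measurable borel"
proof -
  have "shearY t = (\<lambda>z. complex_of_real (Re z) + \<i> * complex_of_real (Im z + t * Re z))"
    by (auto simp: shearY_def Complex_eq fun_eq_iff)
  also have "\<dots> \<in> borel_measurable borel" by measurable
  finally show ?thesis .
qed

lemma nn_integral_shearX:
  fixes f :: "complex \<Rightarrow> ennreal"
  assumes [measurable]: "f \<in> borel_measurable borel"
  shows "(\<integral>\<^sup>+z. f (shearX t z) \<partial>lborel) = (\<integral>\<^sup>+z. f z \<partial>lborel)"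
proof -
  have "(\<integral>\<^sup>+z. f (shearX t z) \<partial>lborel) = (\<integral>\<^sup>+y. (\<integral>\<^sup>+x. f (Complex (x + t * y) y) \<partial>lborel) \<partial>lborel)"
    by (subst nn_integral_complex_yx) (auto simp: shearX_def)
  also have "\<dots> = (\<integral>\<^sup>+y. (\<integral>\<^sup>+x. f (Complex x y) \<partial>lborel) \<partial>lborel)"
  proof (rule nn_integral_cong)
    fix y :: real
    have m: "(\<lambda>x. f (Complex x y)) \<in> borel_measurable borel"
    proof -
      have "(\<lambda>x. f (Complex x y)) = (\<lambda>x. f (complex_of_real x + \<i> * complex_of_real y))"
        by (simp add: Complex_eq)
      also have "\<dots> \<in> borel_measurable borel" by measurable
      finally show ?thesis .
    qed
    show "(\<integral>\<^sup>+x. f (Complex (x + t * y) y) \<partial>lborel) = (\<integral>\<^sup>+x. f (Complex x y) \<partial>lborel)"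
      using nn_integral_real_affine[OF m, of 1 "t * y"] by (simp add: add.commute)
  qed
  also have "\<dots> = (\<integral>\<^sup>+z. f z \<partial>lborel)"
    by (subst nn_integral_complex_yx) auto
  finally show ?thesis .
qed

lemma nn_integral_shearY:
  fixes f :: "complex \<Rightarrow> ennreal"
  assumes [measurable]: "f \<in> borel_measurable borel"
  shows "(\<integral>\<^sup>+z. f (shearY t z) \<partial>lborel) = (\<integral>\<^sup>+z. f z \<partial>lborel)"
proof -
  have "(\<integral>\<^sup>+z. f (shearY t z) \<partial>lborel) = (\<integral>\<^sup>+x. (\<integral>\<^sup>+y. f (Complex x (y + t * x)) \<partial>lborel) \<partial>lborel)"
    by (subst nn_integral_complex_xy) (auto simp: shearY_def)
  also have "\<dots> = (\<integral>\<^sup>+x. (\<integral>\<^sup>+y. f (Complex x y) \<partial>lborel) \<partial>lborel)"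
  proof (rule nn_integral_cong)
    fix x :: real
    have m: "(\<lambda>y. f (Complex x y)) \<in> borel_measurable borel"
    proof -
      have "(\<lambda>y. f (Complex x y)) = (\<lambda>y. f (complex_of_real x + \<i> * complex_of_real y))"
        by (simp add: Complex_eq)
      also have "\<dots> \<in> borel_measurable borel" by measurable
      finally show ?thesis .
    qed
    show "(\<integral>\<^sup>+y. f (Complex x (y + t * x)) \<partial>lborel) = (\<integral>\<^sup>+y. f (Complex x y) \<partial>lborel)"
      using nn_integral_real_affine[OF m, of 1 "t * x"] by (simp add: add.commute)
  qed
  also have "\<dots> = (\<integral>\<^sup>+z. f z \<partial>lborel)"
    by (subst nn_integral_complex_xy) auto
  finally show ?thesis .
qed

lemma distr_lborel_eqI:
  fixes T :: "complex \<Rightarrow> complex"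
  assumes [measurable]: "T \<in> borel_measurable borel"
  assumes eq: "\<And>f :: complex \<Rightarrow> ennreal. f \<in> borel_measurable borel \<Longrightarrow>
                 (\<integral>\<^sup>+z. f (T z) \<partial>lborel) = (\<integral>\<^sup>+z. f z \<partial>lborel)"
  shows "distr lborel borel T = lborel"
proof (rule measure_eqI)
  fix A assume A: "A \<in> sets (distr lborel borel T)"
  then have [measurable]: "A \<in> sets borel" by simp
  have "emeasure (distr lborel borel T) A = emeasure lborel (T -` A \<inter> space lborel)"
    by (rule emeasure_distr) simp_all
  also have "\<dots> = (\<integral>\<^sup>+z. indicator (T -` A \<inter> space lborel) z \<partial>lborel)"
    by (rule nn_integral_indicator[symmetric]) (simp add: measurable_sets_borel[of T borel A])
  also have "\<dots> = (\<integral>\<^sup>+z. indicator A (T z) \<partial>lborel)"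
    by (intro nn_integral_cong) (simp split: split_indicator)
  also have "\<dots> = (\<integral>\<^sup>+z. indicator A z \<partial>lborel)"
    by (rule eq) simp
  also have "\<dots> = emeasure lborel A" by simp
  finally show "emeasure (distr lborel borel T) A = emeasure lborel A" .
qed simp

lemma distr_shearX: "distr lborel borel (shearX t) = lborel"
  by (rule distr_lborel_eqI) (auto intro: nn_integral_shearX)

lemma distr_shearY: "distr lborel borel (shearY t) = lborel"
  by (rule distr_lborel_eqI) (auto intro: nn_integral_shearY)

lemma rot_as_shears:
  fixes u :: complex
  assumes "cmod u = 1" "u \<noteq> -1"
  defines "a \<equiv> - Im u / (1 + Re u)"
  shows "(\<lambda>z. u * z) = shearX a \<circ> shearY (Im u) \<circ> shearX a"
proof -
  have n: "(Re u)^2 + (Im u)^2 = 1" using assms(1) by (simp add: cmod_def)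
  have "1 + Re u \<noteq> 0"
  proof
    assume "1 + Re u = 0"
    then have "Re u = -1" by simp
    with n have "Im u = 0" by simp
    with \<open>Re u = -1\<close> have "u = -1" by (simp add: complex_eq_iff)
    with assms(2) show False by simp
  qed
  then have d: "1 + Re u > 0" using n
    by (smt (verit, ccfv_threshold) power2_eq_square abs_le_square_iff abs_Re_le_cmod assms(1))
  have e1: "1 + a * Im u = Re u"
    using d n unfolding a_def by (simp add: field_simps power2_eq_square)
  have e3: "a * (1 + Re u) = - Im u" using d unfolding a_def by simp
  have "a * (2 + a * Im u) = a * (1 + (1 + a * Im u))" by (simp add: algebra_simps)
  also have "\<dots> = - Im u" using e1 e3 by simp
  finally have e2: "a * (2 + a * Im u) = - Im u" .
  show ?thesis
  proof (rule ext)
    fix z :: complex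
    have "(shearX a \<circ> shearY (Im u) \<circ> shearX a) z =
      Complex (Re z * (1 + a * Im u) + Im z * (a * (2 + a * Im u))) (Im u * Re z + (1 + a * Im u) * Im z)"
      by (simp add: shearX_def shearY_def algebra_simps)
    also have "\<dots> = u * z" using e1 e2 by (simp add: complex_eq_iff algebra_simps)
    finally show "u * z = (shearX a \<circ> shearY (Im u) \<circ> shearX a) z" by simp
  qed
qed

lemma distr_lborel_uminus_complex: "distr lborel borel (\<lambda>z::complex. - z) = lborel"
proof -
  have "lborel = density (distr lborel borel (\<lambda>x::complex. 0 + (-1) *\<^sub>R x)) (\<lambda>_. \<bar>-1::real\<bar> ^ DIM(complex))"
    by (rule lborel_affine) simp
  then show ?thesis by (simp add: density_1)
qed

lemma distr_rot:
  fixes u :: complex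
  assumes "cmod u = 1"
  shows "distr lborel borel (\<lambda>z. u * z) = lborel"
proof (cases "u = -1")
  case True
  then show ?thesis using distr_lborel_uminus_complex by simp
next
  case False
  define a where "a = - Im u / (1 + Re u)"
  have eq: "(\<lambda>z. u * z) = shearX a \<circ> shearY (Im u) \<circ> shearX a"
    unfolding a_def by (rule rot_as_shears[OF assms False])
  have "distr lborel borel (shearX a \<circ> shearY (Im u) \<circ> shearX a)
      = distr (distr (distr lborel borel (shearX a)) borel (shearY (Im u))) borel (shearX a)"
    by (simp add: distr_distr comp_assoc)
  also have "\<dots> = lborel" by (simp add: distr_shearX distr_shearY)
  finally show ?thesis using eq by (simp add: o_def)
qed

lemma integral_rot:
  fixes g :: "complex \<Rightarrow> 'b::{banach, second_countable_topology}"
  assumes "cmod u = 1" and [measurable]: "g \<in> borel_measurable borel"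
  shows "(\<integral>z. g (u * z) \<partial>lborel) = (\<integral>z. g z \<partial>lborel)"
proof -
  have "(\<integral>z. g z \<partial>lborel) = (\<integral>z. g z \<partial>distr lborel borel (\<lambda>z. u * z))"
    using distr_rot[OF assms(1)] by simp
  also have "\<dots> = (\<integral>z. g (u * z) \<partial>lborel)"
    by (rule integral_distr) simp_all
  finally show ?thesis by simp
qed

lemma integrable_rot:
  fixes g :: "complex \<Rightarrow> 'b::{banach, second_countable_topology}"
  assumes "cmod u = 1" and [measurable]: "g \<in> borel_measurable borel"
  shows "integrable lborel (\<lambda>z. g (u * z)) \<longleftrightarrow> integrable lborel g"
proof -
  have "integrable lborel g \<longleftrightarrow> integrable (distr lborel borel (\<lambda>z. u * z)) g"
    using distr_rot[OF assms(1)] by simp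
  also have "\<dots> \<longleftrightarrow> integrable lborel (\<lambda>z. g (u * z))"
    by (rule integrable_distr_eq) simp_all
  finally show ?thesis by simp
qed

lemma integral_transl:
  fixes g :: "complex \<Rightarrow> 'b::{banach, second_countable_topology}"
  assumes [measurable]: "g \<in> borel_measurable borel"
  shows "(\<integral>z. g (c + z) \<partial>lborel) = (\<integral>z. g z \<partial>lborel)"
proof -
  have "(\<integral>z. g z \<partial>lborel) = (\<integral>z. g z \<partial>distr lborel borel ((+) c))"
    using lborel_distr_plus[of c] by simp
  also have "\<dots> = (\<integral>z. g (c + z) \<partial>lborel)"
    by (rule integral_distr) simp_all
  finally show ?thesis by simp
qed

lemma integrable_transl:
  fixes g :: "complex \<Rightarrow> 'b::{banach, second_countable_topology}"
  assumes [measurable]: "g \<in> borel_measurable borel"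
  shows "integrable lborel (\<lambda>z. g (c + z)) \<longleftrightarrow> integrable lborel g"
proof -
  have "integrable lborel g \<longleftrightarrow> integrable (distr lborel borel ((+) c)) g"
    using lborel_distr_plus[of c] by simp
  also have "\<dots> \<longleftrightarrow> integrable lborel (\<lambda>z. g (c + z))"
    by (rule integrable_distr_eq) simp_all
  finally show ?thesis by simp
qed

lemma gauss_1d: "has_bochner_integral lborel (\<lambda>x::real. exp (- x\<^sup>2)) (sqrt pi)"
  using has_bochner_integral_even_function[OF gaussian_moment_0] by simp

lemma nn_gauss_1d:
  assumes t: "t > 0"
  shows "(\<integral>\<^sup>+x. ennreal (exp (- t * x\<^sup>2)) \<partial>lborel) = ennreal (sqrt pi / sqrt t)"
proof -
  have "(\<integral>\<^sup>+x. ennreal (exp (- x\<^sup>2)) \<partial>lborel) = ennreal (sqrt pi)"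
    using gauss_1d by (subst nn_integral_eq_integrable) (auto simp: has_bochner_integral_iff)
  moreover have "(\<integral>\<^sup>+x. ennreal (exp (- x\<^sup>2)) \<partial>lborel)
      = ennreal \<bar>sqrt t\<bar> * (\<integral>\<^sup>+x. ennreal (exp (- (0 + sqrt t * x)\<^sup>2)) \<partial>lborel)"
    using t by (intro nn_integral_real_affine) auto
  moreover have "\<And>x. (0 + sqrt t * x)\<^sup>2 = t * x\<^sup>2" using t by (simp add: power_mult_distrib)
  ultimately have "ennreal (sqrt t) * (\<integral>\<^sup>+x. ennreal (exp (- t * x\<^sup>2)) \<partial>lborel) = ennreal (sqrt pi)"
    using t by simp
  then have "ennreal (1 / sqrt t) * (ennreal (sqrt t) * (\<integral>\<^sup>+x. ennreal (exp (- t * x\<^sup>2)) \<partial>lborel))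
      = ennreal (1 / sqrt t) * ennreal (sqrt pi)" by simp
  then show ?thesis
    using t by (simp add: ennreal_mult[symmetric] mult.assoc[symmetric])
qed
lemma nn_gauss:
  assumes t: "t > 0"
  shows "(\<integral>\<^sup>+z. ennreal (exp (- t * (cmod z)\<^sup>2)) \<partial>lborel) = ennreal (pi / t)"
proof -
  have g: "(\<integral>\<^sup>+y. ennreal (exp (- (t * y\<^sup>2))) \<partial>lborel) = ennreal (sqrt pi / sqrt t)"
    using nn_gauss_1d[OF t] by simp
  have "(\<integral>\<^sup>+z. ennreal (exp (- t * (cmod z)\<^sup>2)) \<partial>lborel)
      = (\<integral>\<^sup>+x. (\<integral>\<^sup>+y. ennreal (exp (- t * x\<^sup>2)) * ennreal (exp (- t * y\<^sup>2)) \<partial>lborel) \<partial>lborel)"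
    by (subst nn_integral_complex_xy)
       (auto simp: cmod_def ennreal_mult[symmetric] exp_add[symmetric] algebra_simps intro!: nn_integral_cong)
  also have "\<dots> = (\<integral>\<^sup>+x. ennreal (exp (- t * x\<^sup>2)) * ennreal (sqrt pi / sqrt t) \<partial>lborel)"
    by (simp add: nn_integral_cmult g)
  also have "\<dots> = ennreal (sqrt pi / sqrt t) * ennreal (sqrt pi / sqrt t)"
    by (simp add: nn_integral_multc g)
  also have "\<dots> = ennreal (pi / t)"
    using t by (simp add: ennreal_mult[symmetric] real_sqrt_mult[symmetric] )
  finally show ?thesis .
qed

lemma gauss_has_integral:
  assumes t: "t > 0"
  shows "has_bochner_integral lborel (\<lambda>z::complex. exp (- t * (cmod z)\<^sup>2)) (pi / t)"
  by (rule has_bochner_integral_nn_integral) (use t nn_gauss[OF t] in auto)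

lemma gauss_integrable: "t > 0 \<Longrightarrow> integrable lborel (\<lambda>z::complex. exp (- t * (cmod z)\<^sup>2))"
  using gauss_has_integral by (auto simp: has_bochner_integral_iff)

lemma gauss_integral: "t > 0 \<Longrightarrow> (\<integral>z. exp (- t * (cmod z)\<^sup>2) \<partial>lborel) = pi / t"
  using gauss_has_integral by (auto simp: has_bochner_integral_iff)

lemma fock_weight_pos: "fock_weight z > 0"
  by (simp add: fock_weight_def)

lemma fock_weight_measurable[measurable]: "fock_weight \<in> borel_measurable borel"
  unfolding fock_weight_def[abs_def] by measurable

lemma fock_weight_integrable: "integrable lborel fock_weight"
  using integrable_divide[OF gauss_integrable[of 1]] by (simp add: fock_weight_def[abs_def])

lemma fock_weight_integral: "(\<integral>z. fock_weight z \<partial>lborel) = 1"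
  using gauss_integral[of 1] by (simp add: fock_weight_def[abs_def])

lemma fock_weight_rot: "cmod u = 1 \<Longrightarrow> fock_weight (u * z) = fock_weight z"
  by (simp add: fock_weight_def norm_mult)

lemma holo_measurable: "h holomorphic_on UNIV \<Longrightarrow> h \<in> borel_measurable borel"
  by (intro borel_measurable_continuous_onI holomorphic_on_imp_continuous_on)

lemma circle_mean:
  assumes hol: "h holomorphic_on UNIV"
  shows "((\<lambda>t. h (z * exp (2 * of_real pi * \<i> * of_real t))) has_integral h 0) {0..1}"
proof -
  define g where "g = (\<lambda>u. h (z * u))"
  have gh: "g holomorphic_on cball 0 1"
    unfolding g_def by (rule holomorphic_on_compose_gen[OF _ hol, unfolded o_def]) (auto intro: holomorphic_intros)
  have "((\<lambda>u. g u / (u - 0)) has_contour_integral (2 * of_real pi * \<i> * g 0)) (circlepath 0 1)"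
    by (rule Cauchy_integral_circlepath_simple[OF gh]) simp
  then have "((\<lambda>x. g (circlepath 0 1 x) / (circlepath 0 1 x - 0) * vector_derivative (circlepath 0 1) (at x within {0..1}))
     has_integral (2 * of_real pi * \<i> * g 0)) {0..1}"
    by (simp add: has_contour_integral_def)
  moreover have "g 0 = h 0" by (simp add: g_def)
  ultimately have I: "((\<lambda>x. g (circlepath 0 1 x) / (circlepath 0 1 x - 0) * vector_derivative (circlepath 0 1) (at x within {0..1}))
     has_integral (2 * of_real pi * \<i> * h 0)) {0..1}" by simp
  have "((\<lambda>x. (2 * of_real pi * \<i>) * h (z * exp (2 * of_real pi * \<i> * of_real x)))
     has_integral (2 * of_real pi * \<i> * h 0)) {0..1}"
  proof (rule has_integral_eq[OF _ I])
    fix x :: real assume "x \<in> {0..1}"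
    then show "g (circlepath 0 1 x) / (circlepath 0 1 x - 0) * vector_derivative (circlepath 0 1) (at x within {0..1})
      = (2 * of_real pi * \<i>) * h (z * exp (2 * of_real pi * \<i> * of_real x))"
    proof -
      have vd: "vector_derivative (circlepath 0 1) (at x within {0..1}) = 2 * pi * \<i> * 1 * exp (2 * of_real pi * \<i> * x)"
        using \<open>x \<in> {0..1}\<close> vector_derivative_circlepath01[of x 0 1] by simp
      have cp: "circlepath 0 1 x = exp (2 * of_real pi * \<i> * x)" by (simp add: circlepath)
      show ?thesis unfolding vd cp g_def by simp
    qed
  qed
  then have "((\<lambda>x. (2 * of_real pi * \<i>) * h (z * exp (2 * of_real pi * \<i> * of_real x)) * (1 / (2 * of_real pi * \<i>)))
     has_integral (2 * of_real pi * \<i> * h 0) * (1 / (2 * of_real pi * \<i>))) {0..1}"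
    by (rule has_integral_mult_left)
  then show ?thesis by simp
qed

lemma circle_mean_L:
  assumes hol: "h holomorphic_on UNIV"
  shows "(\<integral>t. indicator {0..1} t *\<^sub>R h (z * exp (2 * of_real pi * \<i> * of_real t)) \<partial>lborel) = h 0"
proof -
  let ?f = "\<lambda>t::real. h (z * exp (2 * of_real pi * \<i> * of_real t))"
  have c: "continuous_on {0..1} ?f"
    by (intro continuous_on_compose2[OF holomorphic_on_imp_continuous_on[OF hol]] continuous_intros) auto
  have si: "set_integrable lborel {0..1} ?f"
    by (rule borel_integrable_atLeastAtMost'[OF c])
  have "(LINT t:{0..1}|lborel. ?f t) = integral {0..1} ?f"
    by (rule set_borel_integral_eq_integral(2)[OF si])
  also have "\<dots> = h 0" using circle_mean[OF hol] by (rule integral_unique)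
  finally show ?thesis by (simp add: set_lebesgue_integral_def)
qed

lemma nn_integral_rot:
  fixes g :: "complex \<Rightarrow> ennreal"
  assumes "cmod u = 1" and [measurable]: "g \<in> borel_measurable borel"
  shows "(\<integral>\<^sup>+z. g (u * z) \<partial>lborel) = (\<integral>\<^sup>+z. g z \<partial>lborel)"
proof -
  have "(\<integral>\<^sup>+z. g z \<partial>lborel) = (\<integral>\<^sup>+z. g z \<partial>distr lborel borel (\<lambda>z. u * z))"
    using distr_rot[OF assms(1)] by simp
  also have "\<dots> = (\<integral>\<^sup>+z. g (u * z) \<partial>lborel)"
    by (rule nn_integral_distr) simp_all
  finally show ?thesis by simp
qed

lemma mean_value_gauss:
  assumes hol: "h holomorphic_on UNIV"
    and int: "integrable lborel (\<lambda>z. h z * complex_of_real (fock_weight z))"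
  shows "(\<integral>z. h z * complex_of_real (fock_weight z) \<partial>lborel) = h 0"
proof -
  have hm[measurable]: "h \<in> borel_measurable borel" by (rule holo_measurable[OF hol])
  define e where "e = (\<lambda>t::real. exp (2 * of_real pi * \<i> * of_real t) :: complex)"
  have e1: "cmod (e t) = 1" for t by (simp add: e_def norm_exp_eq_Re)
  have em[measurable]: "e \<in> borel_measurable borel" unfolding e_def by measurable
  define I where "I = (\<integral>z. h z * of_real (fock_weight z) \<partial>lborel)"
  have rotI: "(\<integral>z. h (e t * z) * of_real (fock_weight z) \<partial>lborel) = I" for t
  proof -
    have "(\<integral>z. h (e t * z) * of_real (fock_weight z) \<partial>lborel)
        = (\<integral>z. (\<lambda>z. h z * of_real (fock_weight z)) (e t * z) \<partial>lborel)"
      using fock_weight_rot[OF e1] by simp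
    also have "\<dots> = I" unfolding I_def by (rule integral_rot[OF e1]) measurable
    finally show ?thesis .
  qed
  define N where "N = (\<integral>\<^sup>+z. ennreal (norm (h z * of_real (fock_weight z))) \<partial>lborel)"
  have Nfin: "N < \<infinity>" using int unfolding N_def integrable_iff_bounded by simp
  have rotN: "(\<integral>\<^sup>+z. ennreal (norm (h (e t * z) * of_real (fock_weight z))) \<partial>lborel) = N" for t
  proof -
    have "(\<integral>\<^sup>+z. ennreal (norm (h (e t * z) * of_real (fock_weight z))) \<partial>lborel)
        = (\<integral>\<^sup>+z. (\<lambda>z. ennreal (norm (h z * of_real (fock_weight z)))) (e t * z) \<partial>lborel)"
      using fock_weight_rot[OF e1] by simp
    also have "\<dots> = N" unfolding N_def by (rule nn_integral_rot[OF e1]) measurable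
    finally show ?thesis .
  qed
  define F where "F = (\<lambda>t z. indicator {0..1::real} t *\<^sub>R (h (e t * z) * of_real (fock_weight z)))"
  have Fm[measurable]: "(\<lambda>(t,z). F t z) \<in> borel_measurable (lborel \<Otimes>\<^sub>M lborel)"
    unfolding F_def by measurable
  have Fint: "integrable (lborel \<Otimes>\<^sub>M lborel) (\<lambda>(t,z). F t z)"
    unfolding integrable_iff_bounded
  proof
    show "(\<lambda>(t,z). F t z) \<in> borel_measurable (lborel \<Otimes>\<^sub>M lborel)" by (rule Fm)
    have "(\<integral>\<^sup>+p. ennreal (norm ((\<lambda>(t,z). F t z) p)) \<partial>(lborel \<Otimes>\<^sub>M lborel))
        = (\<integral>\<^sup>+t. (\<integral>\<^sup>+z. ennreal (norm (F t z)) \<partial>lborel) \<partial>lborel)"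
      by (subst lborel.nn_integral_fst[symmetric]) (auto simp: F_def)
    also have "\<dots> = (\<integral>\<^sup>+t. N * indicator {0..1::real} t \<partial>lborel)"
      by (intro nn_integral_cong) (auto simp: F_def rotN split: split_indicator)
    also have "\<dots> = N" by (simp add: nn_integral_cmult_indicator)
    finally show "(\<integral>\<^sup>+p. ennreal (norm ((\<lambda>(t,z). F t z) p)) \<partial>(lborel \<Otimes>\<^sub>M lborel)) < \<infinity>"
      using Nfin by simp
  qed
  have fub: "(\<integral>z. (\<integral>t. F t z \<partial>lborel) \<partial>lborel) = (\<integral>t. (\<integral>z. F t z \<partial>lborel) \<partial>lborel)"
    by (rule lborel_pair.Fubini_integral[OF Fint])
  have rhs: "(\<integral>t. (\<integral>z. F t z \<partial>lborel) \<partial>lborel) = I"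
  proof -
    have "(\<integral>t. (\<integral>z. F t z \<partial>lborel) \<partial>lborel) = (\<integral>t. indicator {0..1::real} t *\<^sub>R I \<partial>lborel)"
      by (intro Bochner_Integration.integral_cong) (auto simp: F_def rotI)
    also have "\<dots> = I" by simp
    finally show ?thesis .
  qed
  have lhs: "(\<integral>z. (\<integral>t. F t z \<partial>lborel) \<partial>lborel) = h 0"
  proof -
    have "(\<integral>z. (\<integral>t. F t z \<partial>lborel) \<partial>lborel) = (\<integral>z. h 0 * of_real (fock_weight z) \<partial>lborel)"
    proof (intro Bochner_Integration.integral_cong refl)
      fix z
      have "(\<integral>t. F t z \<partial>lborel) = (\<integral>t. (indicator {0..1::real} t *\<^sub>R h (e t * z)) * of_real (fock_weight z) \<partial>lborel)"
        by (intro Bochner_Integration.integral_cong) (auto simp: F_def)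
      also have "\<dots> = (\<integral>t. indicator {0..1::real} t *\<^sub>R h (e t * z) \<partial>lborel) * of_real (fock_weight z)"
        by (rule integral_mult_left_zero)
      also have "(\<integral>t. indicator {0..1::real} t *\<^sub>R h (e t * z) \<partial>lborel) = h 0"
        using circle_mean_L[OF hol, of z] by (simp add: e_def mult.commute)
      finally show "(\<integral>t. F t z \<partial>lborel) = h 0 * of_real (fock_weight z)" .
    qed
    also have "\<dots> = h 0 * of_real (\<integral>z. fock_weight z \<partial>lborel)" by simp
    also have "\<dots> = h 0" by (simp add: fock_weight_integral)
    finally show ?thesis .
  qed
  show ?thesis using fub lhs rhs unfolding I_def by simp
qed

lemma borel_measurable_cnj[measurable]:
  "f \<in> borel_measurable M \<Longrightarrow> (\<lambda>x. cnj (f x)) \<in> borel_measurable M"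
proof -
  assume [measurable]: "f \<in> borel_measurable M"
  have "(\<lambda>x. cnj (f x)) = (\<lambda>x. complex_of_real (Re (f x)) - \<i> * complex_of_real (Im (f x)))"
    by (auto simp: complex_eq_iff)
  also have "\<dots> \<in> borel_measurable M" by measurable
  finally show ?thesis .
qed

lemma fock_weight_measurable_lborel[measurable]: "fock_weight \<in> borel_measurable lborel"
  by simp

lemma fock_weight_abs[simp]: "\<bar>fock_weight z\<bar> = fock_weight z"
  using fock_weight_pos[of z] by simp

lemma fock_weight_nonneg[simp]: "0 \<le> fock_weight z"
  using fock_weight_pos[of z] by simp

definition sqint :: "(complex \<Rightarrow> complex) \<Rightarrow> bool" where
  "sqint f \<longleftrightarrow> f \<in> borel_measurable borel \<and> integrable lborel (\<lambda>z. (cmod (f z))\<^sup>2 * fock_weight z)"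

lemma fock_space_holo: "f \<in> fock_space \<Longrightarrow> f holomorphic_on UNIV"
  by (simp add: fock_space_def)

lemma fock_space_meas: "f \<in> fock_space \<Longrightarrow> f \<in> borel_measurable borel"
  by (simp add: fock_space_def holo_measurable)

lemma fock_space_sqint: "f \<in> fock_space \<Longrightarrow> sqint f"
  by (simp add: fock_space_def sqint_def holo_measurable)

lemma fock_spaceI: "f holomorphic_on UNIV \<Longrightarrow> integrable lborel (\<lambda>z. (cmod (f z))\<^sup>2 * fock_weight z) \<Longrightarrow> f \<in> fock_space"
  by (simp add: fock_space_def)

lemma amgm_bound:
  "cmod (f z * cnj (g z) * complex_of_real (fock_weight z))
    \<le> ((cmod (f z))\<^sup>2 * fock_weight z + (cmod (g z))\<^sup>2 * fock_weight z) / 2"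
proof -
  have w: "fock_weight z \<ge> 0" using fock_weight_pos[of z] by simp
  have "0 \<le> (cmod (f z) - cmod (g z))\<^sup>2" by simp
  then have "2 * (cmod (f z) * cmod (g z)) \<le> (cmod (f z))\<^sup>2 + (cmod (g z))\<^sup>2"
    by (simp add: power2_diff)
  then have "2 * (cmod (f z) * cmod (g z)) * fock_weight z \<le> ((cmod (f z))\<^sup>2 + (cmod (g z))\<^sup>2) * fock_weight z"
    using w by (rule mult_right_mono)
  then show ?thesis using w by (simp add: norm_mult algebra_simps)
qed

lemma cs_integrable:
  assumes f: "sqint f" and g: "sqint g"
  shows "integrable lborel (\<lambda>z. f z * cnj (g z) * complex_of_real (fock_weight z))"
proof (rule Bochner_Integration.integrable_bound)
  show "integrable lborel (\<lambda>z. ((cmod (f z))\<^sup>2 * fock_weight z + (cmod (g z))\<^sup>2 * fock_weight z) / 2)"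
    using f g by (auto simp: sqint_def)
  have [measurable]: "f \<in> borel_measurable borel" "g \<in> borel_measurable borel" using f g by (auto simp: sqint_def)
  show "(\<lambda>z. f z * cnj (g z) * complex_of_real (fock_weight z)) \<in> borel_measurable lborel" by measurable
  show "AE z in lborel. norm (f z * cnj (g z) * complex_of_real (fock_weight z))
        \<le> norm (((cmod (f z))\<^sup>2 * fock_weight z + (cmod (g z))\<^sup>2 * fock_weight z) / 2)"
  proof (rule AE_I2)
    fix z
    have "0 \<le> ((cmod (f z))\<^sup>2 * fock_weight z + (cmod (g z))\<^sup>2 * fock_weight z) / 2"
      using fock_weight_pos[of z] by simp
    then show "norm (f z * cnj (g z) * complex_of_real (fock_weight z))
        \<le> norm (((cmod (f z))\<^sup>2 * fock_weight z + (cmod (g z))\<^sup>2 * fock_weight z) / 2)"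
      using amgm_bound[of f z g] by simp
  qed
qed

lemma cs_abs_integrable:
  assumes f: "sqint f" and g: "sqint g"
  shows "integrable lborel (\<lambda>z. cmod (f z) * cmod (g z) * fock_weight z)"
proof -
  have "integrable lborel (\<lambda>z. norm (f z * cnj (g z) * complex_of_real (fock_weight z)))"
    using cs_integrable[OF f g] by (rule integrable_norm)
  moreover have "(\<lambda>z. norm (f z * cnj (g z) * complex_of_real (fock_weight z))) = (\<lambda>z. cmod (f z) * cmod (g z) * fock_weight z)"
    using fock_weight_pos by (auto simp: norm_mult intro!: ext)
  ultimately show ?thesis by simp
qed

lemma cs_real:
  assumes f: "sqint f" and g: "sqint g"
  shows "(\<integral>z. cmod (f z) * cmod (g z) * fock_weight z \<partial>lborel)
     \<le> sqrt (\<integral>z. (cmod (f z))\<^sup>2 * fock_weight z \<partial>lborel) * sqrt (\<integral>z. (cmod (g z))\<^sup>2 * fock_weight z \<partial>lborel)"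
proof -
  have [measurable]: "f \<in> borel_measurable borel" "g \<in> borel_measurable borel" using f g by (auto simp: sqint_def)
  define C where "C = (\<integral>z. cmod (f z) * cmod (g z) * fock_weight z \<partial>lborel)"
  define A where "A = (\<integral>z. (cmod (f z))\<^sup>2 * fock_weight z \<partial>lborel)"
  define B where "B = (\<integral>z. (cmod (g z))\<^sup>2 * fock_weight z \<partial>lborel)"
  have wp: "\<And>z. fock_weight z \<ge> 0" using fock_weight_pos less_imp_le by blast
  have A0: "A \<ge> 0" unfolding A_def using wp by (intro integral_nonneg_AE) auto
  have B0: "B \<ge> 0" unfolding B_def using wp by (intro integral_nonneg_AE) auto
  have C0: "C \<ge> 0" unfolding C_def using wp by (intro integral_nonneg_AE) auto
  let ?F = "\<lambda>z. ennreal (cmod (f z) * sqrt (fock_weight z))"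
  let ?G = "\<lambda>z. ennreal (cmod (g z) * sqrt (fock_weight z))"
  have "(\<integral>\<^sup>+z. ?F z * ?G z \<partial>lborel)\<^sup>2 \<le> (\<integral>\<^sup>+z. ?F z ^ 2 \<partial>lborel) * (\<integral>\<^sup>+z. ?G z ^ 2 \<partial>lborel)"
    by (rule Cauchy_Schwarz_nn_integral) measurable
  moreover have "(\<integral>\<^sup>+z. ?F z * ?G z \<partial>lborel) = ennreal C"
  proof -
    have "(\<integral>\<^sup>+z. ?F z * ?G z \<partial>lborel) = (\<integral>\<^sup>+z. ennreal (cmod (f z) * cmod (g z) * fock_weight z) \<partial>lborel)"
      using wp by (intro nn_integral_cong) (auto simp: ennreal_mult[symmetric] algebra_simps)
    also have "\<dots> = ennreal C" unfolding C_def
      using cs_abs_integrable[OF f g] wp by (intro nn_integral_eq_integral) auto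
    finally show ?thesis .
  qed
  moreover have "(\<integral>\<^sup>+z. ?F z ^ 2 \<partial>lborel) = ennreal A"
  proof -
    have "(\<integral>\<^sup>+z. ?F z ^ 2 \<partial>lborel) = (\<integral>\<^sup>+z. ennreal ((cmod (f z))\<^sup>2 * fock_weight z) \<partial>lborel)"
      using wp by (intro nn_integral_cong) (subst ennreal_power, auto simp: power_mult_distrib)
    also have "\<dots> = ennreal A" unfolding A_def
      using f wp by (intro nn_integral_eq_integral) (auto simp: sqint_def)
    finally show ?thesis .
  qed
  moreover have "(\<integral>\<^sup>+z. ?G z ^ 2 \<partial>lborel) = ennreal B"
  proof -
    have "(\<integral>\<^sup>+z. ?G z ^ 2 \<partial>lborel) = (\<integral>\<^sup>+z. ennreal ((cmod (g z))\<^sup>2 * fock_weight z) \<partial>lborel)"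
      using wp by (intro nn_integral_cong) (subst ennreal_power, auto simp: power_mult_distrib)
    also have "\<dots> = ennreal B" unfolding B_def
      using g wp by (intro nn_integral_eq_integral) (auto simp: sqint_def)
    finally show ?thesis .
  qed
  ultimately have "ennreal (C\<^sup>2) \<le> ennreal (A * B)"
    using A0 B0 C0 by (simp add: ennreal_power ennreal_mult)
  then have "C\<^sup>2 \<le> A * B" using A0 B0 by (simp add: ennreal_le_iff)
  then have "C \<le> sqrt (A * B)" using C0 by (simp add: real_le_rsqrt)
  then show ?thesis unfolding A_def B_def C_def by (simp add: real_sqrt_mult)
qed

lemma cs_ineq:
  assumes f: "sqint f" and g: "sqint g"
  shows "cmod (\<integral>z. f z * cnj (g z) * complex_of_real (fock_weight z) \<partial>lborel)
     \<le> sqrt (\<integral>z. (cmod (f z))\<^sup>2 * fock_weight z \<partial>lborel) * sqrt (\<integral>z. (cmod (g z))\<^sup>2 * fock_weight z \<partial>lborel)"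
proof -
  have "cmod (\<integral>z. f z * cnj (g z) * complex_of_real (fock_weight z) \<partial>lborel)
      \<le> (\<integral>z. norm (f z * cnj (g z) * complex_of_real (fock_weight z)) \<partial>lborel)"
    by (rule integral_norm_bound)
  also have "\<dots> = (\<integral>z. cmod (f z) * cmod (g z) * fock_weight z \<partial>lborel)"
    using fock_weight_pos by (intro Bochner_Integration.integral_cong) (auto simp: norm_mult)
  finally show ?thesis using cs_real[OF f g] by linarith
qed

lemma fock_cs:
  assumes "sqint f" "sqint g"
  shows "cmod (fock_inner f g) \<le> fock_norm f * fock_norm g"
  using cs_ineq[OF assms] by (simp add: fock_inner_def fock_norm_def)

lemma fock_norm_sq: "(fock_norm f)\<^sup>2 = (\<integral>z. (cmod (f z))\<^sup>2 * fock_weight z \<partial>lborel)"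
proof -
  have "0 \<le> (\<integral>z. (cmod (f z))\<^sup>2 * fock_weight z \<partial>lborel)"
    by (intro integral_nonneg_AE) auto
  then show ?thesis by (simp add: fock_norm_def)
qed

lemma fock_norm_nonneg: "fock_norm f \<ge> 0"
  by (simp add: fock_norm_def)

lemma fock_inner_self:
  assumes "sqint f"
  shows "fock_inner f f = complex_of_real ((fock_norm f)\<^sup>2)"
proof -
  have "fock_inner f f = (\<integral>z. complex_of_real ((cmod (f z))\<^sup>2 * fock_weight z) \<partial>lborel)"
    unfolding fock_inner_def
    by (intro Bochner_Integration.integral_cong refl) (simp add: complex_norm_square[symmetric])
  also have "\<dots> = complex_of_real (\<integral>z. (cmod (f z))\<^sup>2 * fock_weight z \<partial>lborel)"
    by (rule integral_complex_of_real)
  also have "\<dots> = complex_of_real ((fock_norm f)\<^sup>2)" by (simp add: fock_norm_sq)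
  finally show ?thesis .
qed

lemma fock_inner_cnj: "fock_inner g f = cnj (fock_inner f g)"
proof -
  have "cnj (fock_inner f g) = (\<integral>z. cnj (f z * cnj (g z) * complex_of_real (fock_weight z)) \<partial>lborel)"
    unfolding fock_inner_def by (rule Bochner_Integration.integral_cnj[symmetric])
  also have "\<dots> = fock_inner g f"
    unfolding fock_inner_def by (intro Bochner_Integration.integral_cong refl) simp
  finally show ?thesis by simp
qed

lemma fock_inner_zero[simp]: "fock_inner (\<lambda>z. 0) g = 0"
  by (simp add: fock_inner_def)

lemma sqint_add:
  assumes f: "sqint f" and g: "sqint g"
  shows "sqint (\<lambda>z. f z + g z)"
proof -
  have [measurable]: "f \<in> borel_measurable borel" "g \<in> borel_measurable borel" using f g by (auto simp: sqint_def)
  have "integrable lborel (\<lambda>z. (cmod (f z + g z))\<^sup>2 * fock_weight z)"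
  proof (rule Bochner_Integration.integrable_bound)
    show "integrable lborel (\<lambda>z. 2 * ((cmod (f z))\<^sup>2 * fock_weight z) + 2 * ((cmod (g z))\<^sup>2 * fock_weight z))"
      using f g by (auto simp: sqint_def)
    show "(\<lambda>z. (cmod (f z + g z))\<^sup>2 * fock_weight z) \<in> borel_measurable lborel" by measurable
    show "AE z in lborel. norm ((cmod (f z + g z))\<^sup>2 * fock_weight z)
        \<le> norm (2 * ((cmod (f z))\<^sup>2 * fock_weight z) + 2 * ((cmod (g z))\<^sup>2 * fock_weight z))"
    proof (rule AE_I2)
      fix z
      have "cmod (f z + g z) \<le> cmod (f z) + cmod (g z)" by (rule norm_triangle_ineq)
      then have "(cmod (f z + g z))\<^sup>2 \<le> (cmod (f z) + cmod (g z))\<^sup>2"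
        by (simp add: power_mono)
      also have "\<dots> \<le> 2 * (cmod (f z))\<^sup>2 + 2 * (cmod (g z))\<^sup>2"
        using sum_squares_bound[of "cmod (f z)" "cmod (g z)"]
        by (simp add: power2_sum)
      finally have "(cmod (f z + g z))\<^sup>2 * fock_weight z \<le> (2 * (cmod (f z))\<^sup>2 + 2 * (cmod (g z))\<^sup>2) * fock_weight z"
        by (simp add: mult_right_mono)
      then show "norm ((cmod (f z + g z))\<^sup>2 * fock_weight z)
        \<le> norm (2 * ((cmod (f z))\<^sup>2 * fock_weight z) + 2 * ((cmod (g z))\<^sup>2 * fock_weight z))"
        by (simp add: algebra_simps)
    qed
  qed
  then show ?thesis by (simp add: sqint_def)
qed

lemma sqint_scale:
  assumes f: "sqint f"
  shows "sqint (\<lambda>z. c * f z)"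
proof -
  have [measurable]: "f \<in> borel_measurable borel" using f by (auto simp: sqint_def)
  have "integrable lborel (\<lambda>z. (cmod c)\<^sup>2 * ((cmod (f z))\<^sup>2 * fock_weight z))"
    using f by (auto simp: sqint_def)
  then show ?thesis by (simp add: sqint_def norm_mult power_mult_distrib mult.assoc)
qed

lemma fock_norm_scale: "fock_norm (\<lambda>z. c * f z) = cmod c * fock_norm f"
proof -
  have "(\<integral>z. (cmod (c * f z))\<^sup>2 * fock_weight z \<partial>lborel) = (cmod c)\<^sup>2 * (\<integral>z. (cmod (f z))\<^sup>2 * fock_weight z \<partial>lborel)"
    by (simp add: norm_mult power_mult_distrib mult.assoc)
  then show ?thesis by (simp add: fock_norm_def real_sqrt_mult)
qed

lemma fock_space_add: "f \<in> fock_space \<Longrightarrow> g \<in> fock_space \<Longrightarrow> (\<lambda>z. f z + g z) \<in> fock_space"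
  using sqint_add[OF fock_space_sqint fock_space_sqint, of f g]
  by (auto simp: fock_space_def sqint_def intro: holomorphic_intros)

lemma fock_space_scale: "f \<in> fock_space \<Longrightarrow> (\<lambda>z. c * f z) \<in> fock_space"
  using sqint_scale[OF fock_space_sqint, of f c]
  by (auto simp: fock_space_def sqint_def intro: holomorphic_intros)

lemma fock_space_diff: "f \<in> fock_space \<Longrightarrow> g \<in> fock_space \<Longrightarrow> (\<lambda>z. f z - g z) \<in> fock_space"
  using fock_space_add[of f "\<lambda>z. (-1) * g z"] fock_space_scale[of g "-1"] by simp

lemma fock_space_const: "(\<lambda>z. c) \<in> fock_space"
proof (rule fock_spaceI)
  show "(\<lambda>z. c) holomorphic_on UNIV" by (intro holomorphic_intros)
  show "integrable lborel (\<lambda>z. (cmod c)\<^sup>2 * fock_weight z)"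
    using fock_weight_integrable by simp
qed

lemma fock_space_zero: "(\<lambda>z. 0) \<in> fock_space"
  using fock_space_const[of 0] .

definition fkern :: "complex \<Rightarrow> complex \<Rightarrow> complex" where
  "fkern v = (\<lambda>z. exp (cnj v * z))"

lemma fkern_holo: "fkern v holomorphic_on UNIV"
  unfolding fkern_def by (intro holomorphic_intros)

lemma cmod_exp_sq: "(cmod (exp x))\<^sup>2 = exp (2 * Re x)"
proof -
  have "exp (2 * Re x) = exp (Re x) * exp (Re x)" by (metis exp_add mult_2)
  then show ?thesis by (simp add: norm_exp_eq_Re power2_eq_square)
qed

lemma kern_alg: "2 * Re (cnj v * (v + u)) - (cmod (v + u))\<^sup>2 = (cmod v)\<^sup>2 - (cmod u)\<^sup>2"
  unfolding cmod_power2 by (simp add: algebra_simps power2_eq_square)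

lemma fkern_sq_integral:
  shows "integrable lborel (\<lambda>z. (cmod (fkern v z))\<^sup>2 * fock_weight z)"
    and "(\<integral>z. (cmod (fkern v z))\<^sup>2 * fock_weight z \<partial>lborel) = exp ((cmod v)\<^sup>2)"
proof -
  define G where "G = (\<lambda>z. (cmod (fkern v z))\<^sup>2 * fock_weight z)"
  have Gm[measurable]: "G \<in> borel_measurable borel" unfolding G_def fkern_def by measurable
  have GT: "G (v + u) = exp ((cmod v)\<^sup>2) * fock_weight u" for u
  proof -
    have "G (v + u) = exp (2 * Re (cnj v * (v + u))) * (exp (- (cmod (v + u))\<^sup>2) / pi)"
      by (simp only: G_def fkern_def cmod_exp_sq fock_weight_def)
    also have "\<dots> = exp (2 * Re (cnj v * (v + u)) - (cmod (v + u))\<^sup>2) / pi"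
      by (simp only: exp_diff exp_minus) (simp add: field_simps)
    also have "\<dots> = exp ((cmod v)\<^sup>2 - (cmod u)\<^sup>2) / pi" by (simp only: kern_alg)
    also have "\<dots> = exp ((cmod v)\<^sup>2) * fock_weight u"
      by (simp add: fock_weight_def exp_diff exp_minus field_simps)
    finally show ?thesis .
  qed
  have "integrable lborel (\<lambda>u. G (v + u))"
    unfolding GT using fock_weight_integrable by simp
  then show "integrable lborel (\<lambda>z. (cmod (fkern v z))\<^sup>2 * fock_weight z)"
    using integrable_transl[OF Gm, of v] unfolding G_def by simp
  have "(\<integral>z. G z \<partial>lborel) = (\<integral>u. G (v + u) \<partial>lborel)" by (rule integral_transl[symmetric, OF Gm])
  also have "\<dots> = exp ((cmod v)\<^sup>2)" unfolding GT by (simp add: fock_weight_integral)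
  finally show "(\<integral>z. (cmod (fkern v z))\<^sup>2 * fock_weight z \<partial>lborel) = exp ((cmod v)\<^sup>2)"
    unfolding G_def .
qed

lemma fkern_in: "fkern v \<in> fock_space"
  using fkern_holo fkern_sq_integral(1) by (rule fock_spaceI)

lemma sqrt_exp: "sqrt (exp x) = exp (x / 2)"
proof -
  have "exp (x / 2) ^ 2 = exp x" by (metis exp_add field_sum_of_halves power2_eq_square)
  then show ?thesis by (metis exp_ge_zero real_sqrt_abs abs_of_nonneg)
qed

lemma fkern_norm: "fock_norm (fkern v) = exp ((cmod v)\<^sup>2 / 2)"
  by (simp add: fock_norm_def fkern_sq_integral(2) sqrt_exp)

lemma cw: "complex_of_real (fock_weight z) = exp (- complex_of_real ((cmod z)\<^sup>2)) / complex_of_real pi"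
  by (simp only: fock_weight_def of_real_divide of_real_minus[symmetric] exp_of_real)

lemma reproducing:
  assumes f: "f \<in> fock_space"
  shows "fock_inner f (fkern v) = f v"
proof -
  have fm[measurable]: "f \<in> borel_measurable borel" by (rule fock_space_meas[OF f])
  define G where "G = (\<lambda>z. f z * cnj (fkern v z) * complex_of_real (fock_weight z))"
  have Gm[measurable]: "G \<in> borel_measurable borel" unfolding G_def fkern_def by measurable
  define h where "h = (\<lambda>u. f (v + u) * exp (- cnj v * u))"
  have hol: "h holomorphic_on UNIV"
    unfolding h_def
    by (intro holomorphic_intros holomorphic_on_compose_gen[OF _ fock_space_holo[OF f], unfolded o_def]) auto
  have GT: "G (v + u) = h u * complex_of_real (fock_weight u)" for u
  proof -
    have e: "v * cnj (v + u) - complex_of_real ((cmod (v + u))\<^sup>2) = - cnj v * u - complex_of_real ((cmod u)\<^sup>2)"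
      by (simp only: complex_norm_square) (simp add: algebra_simps)
    have "G (v + u) = f (v + u) * (exp (v * cnj (v + u)) * exp (- complex_of_real ((cmod (v + u))\<^sup>2))) / complex_of_real pi"
      unfolding G_def fkern_def cw by (simp add: exp_cnj)
    also have "exp (v * cnj (v + u)) * exp (- complex_of_real ((cmod (v + u))\<^sup>2))
        = exp (- cnj v * u) * exp (- complex_of_real ((cmod u)\<^sup>2))"
      using e by (simp add: exp_add[symmetric])
    also have "f (v + u) * (exp (- cnj v * u) * exp (- complex_of_real ((cmod u)\<^sup>2))) / complex_of_real pi
        = h u * complex_of_real (fock_weight u)"
      unfolding h_def cw by simp
    finally show ?thesis .
  qed
  have Gint: "integrable lborel G"
    unfolding G_def by (rule cs_integrable[OF fock_space_sqint[OF f] fock_space_sqint[OF fkern_in]])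
  have hint: "integrable lborel (\<lambda>u. h u * complex_of_real (fock_weight u))"
    using Gint integrable_transl[OF Gm, of v] unfolding GT by simp
  have "fock_inner f (fkern v) = (\<integral>z. G z \<partial>lborel)" by (simp add: fock_inner_def G_def)
  also have "\<dots> = (\<integral>u. G (v + u) \<partial>lborel)" by (rule integral_transl[symmetric, OF Gm])
  also have "\<dots> = (\<integral>u. h u * complex_of_real (fock_weight u) \<partial>lborel)" unfolding GT ..
  also have "\<dots> = h 0" by (rule mean_value_gauss[OF hol hint])
  also have "\<dots> = f v" by (simp add: h_def)
  finally show ?thesis .
qed

lemma point_eval:
  assumes f: "f \<in> fock_space"
  shows "cmod (f v) \<le> fock_norm f * exp ((cmod v)\<^sup>2 / 2)"
  using fock_cs[OF fock_space_sqint[OF f] fock_space_sqint[OF fkern_in], of v]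
  by (simp add: reproducing[OF f] fkern_norm)

lemma fock_inner_kern_left:
  assumes h: "h \<in> fock_space"
  shows "fock_inner (fkern z) h = cnj (h z)"
  by (subst fock_inner_cnj) (simp add: reproducing[OF h])

lemma fock_ident:
  assumes "h1 \<in> fock_space" "h2 \<in> fock_space"
    and "\<And>g. g \<in> fock_space \<Longrightarrow> fock_inner g h1 = fock_inner g h2"
  shows "h1 = h2"
proof
  fix z
  have "cnj (h1 z) = cnj (h2 z)"
    using assms(3)[OF fkern_in[of z]] by (simp add: fock_inner_kern_left assms(1,2))
  then show "h1 z = h2 z" by simp
qed

lemma point_eval_sq:
  assumes f: "f \<in> fock_space"
  shows "(cmod (f v))\<^sup>2 \<le> (fock_norm f)\<^sup>2 * exp ((cmod v)\<^sup>2)"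
proof -
  have "(cmod (f v))\<^sup>2 \<le> (fock_norm f * exp ((cmod v)\<^sup>2 / 2))\<^sup>2"
    using point_eval[OF f, of v] by (simp add: power_mono)
  also have "\<dots> = (fock_norm f)\<^sup>2 * exp ((cmod v)\<^sup>2)"
    by (simp add: power_mult_distrib power2_eq_square exp_add[symmetric])
  finally show ?thesis .
qed

definition Mc :: "real \<Rightarrow> real \<Rightarrow> real" where
  "Mc \<rho> B = sqrt (exp (B\<^sup>2 * (1 + \<rho>\<^sup>2 / ((1 - \<rho>\<^sup>2) / 2))) / ((1 - \<rho>\<^sup>2) / 2))"

lemma exponent_bound:
  assumes "cmod \<alpha> \<le> \<rho>" "\<rho> < 1" "cmod \<beta> \<le> B"
  shows "(cmod (\<alpha> * z + \<beta>))\<^sup>2 - (cmod z)\<^sup>2 \<le> - ((1 - \<rho>\<^sup>2) / 2) * (cmod z)\<^sup>2 + B\<^sup>2 * (1 + \<rho>\<^sup>2 / ((1 - \<rho>\<^sup>2) / 2))"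
proof -
  define r where "r = cmod z"
  define d where "d = (1 - \<rho>\<^sup>2) / 2"
  have \<rho>0: "\<rho> \<ge> 0" using assms(1) norm_ge_zero order_trans by blast
  have B0: "B \<ge> 0" using assms(3) norm_ge_zero order_trans by blast
  have r0: "r \<ge> 0" by (simp add: r_def)
  have "\<rho>\<^sup>2 < 1" using \<rho>0 assms(2) by (simp add: power_less_one_iff abs_square_less_1)
  then have d0: "d > 0" by (simp add: d_def)
  have "cmod (\<alpha> * z + \<beta>) \<le> cmod \<alpha> * r + cmod \<beta>"
    unfolding r_def using norm_triangle_ineq[of "\<alpha> * z" \<beta>] by (simp add: norm_mult)
  also have "\<dots> \<le> \<rho> * r + B" using assms r0 by (simp add: add_mono mult_right_mono)
  finally have "(cmod (\<alpha> * z + \<beta>))\<^sup>2 \<le> (\<rho> * r + B)\<^sup>2" by (simp add: power_mono)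
  moreover have "2 * \<rho> * B * r \<le> d * r\<^sup>2 + \<rho>\<^sup>2 * B\<^sup>2 / d"
  proof -
    have "0 \<le> (d * r - \<rho> * B)\<^sup>2" by simp
    then have "2 * \<rho> * B * r * d \<le> d * r\<^sup>2 * d + \<rho>\<^sup>2 * B\<^sup>2"
      by (simp add: power2_eq_square algebra_simps)
    then have "2 * \<rho> * B * r \<le> (d * r\<^sup>2 * d + \<rho>\<^sup>2 * B\<^sup>2) / d"
      using d0 by (simp add: pos_le_divide_eq)
    also have "\<dots> = d * r\<^sup>2 + \<rho>\<^sup>2 * B\<^sup>2 / d" using d0 by (simp add: field_simps)
    finally show ?thesis .
  qed
  ultimately have "(cmod (\<alpha> * z + \<beta>))\<^sup>2 \<le> \<rho>\<^sup>2 * r\<^sup>2 + d * r\<^sup>2 + \<rho>\<^sup>2 * B\<^sup>2 / d + B\<^sup>2"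
    by (simp add: power2_sum power_mult_distrib algebra_simps)
  moreover have "\<rho>\<^sup>2 * r\<^sup>2 + d * r\<^sup>2 - r\<^sup>2 = - d * r\<^sup>2" by (simp add: d_def algebra_simps)
  ultimately show ?thesis unfolding r_def[symmetric] d_def[symmetric]
    by (simp add: algebra_simps)
qed

lemma comp_affine:
  assumes f: "f \<in> fock_space" and a: "cmod \<alpha> \<le> \<rho>" "\<rho> < 1" "cmod \<beta> \<le> B"
  shows "(\<lambda>z. f (\<alpha> * z + \<beta>)) \<in> fock_space"
    and "fock_norm (\<lambda>z. f (\<alpha> * z + \<beta>)) \<le> Mc \<rho> B * fock_norm f"
proof -
  have fm[measurable]: "f \<in> borel_measurable borel" by (rule fock_space_meas[OF f])
  define d where "d = (1 - \<rho>\<^sup>2) / 2"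
  define C where "C = B\<^sup>2 * (1 + \<rho>\<^sup>2 / d)"
  define N where "N = fock_norm f"
  have \<rho>0: "\<rho> \<ge> 0" using a(1) norm_ge_zero order_trans by blast
  have "\<rho>\<^sup>2 < 1" using \<rho>0 a(2) by (simp add: power_less_one_iff abs_square_less_1)
  then have d0: "d > 0" by (simp add: d_def)
  define R where "R = (\<lambda>z. N\<^sup>2 * exp C / pi * exp (- d * (cmod z)\<^sup>2))"
  have Rint: "integrable lborel R"
    unfolding R_def using gauss_integrable[OF d0] by simp
  have Rval: "(\<integral>z. R z \<partial>lborel) = N\<^sup>2 * exp C / d"
    unfolding R_def using gauss_integral[OF d0] by simp
  have pw: "(cmod (f (\<alpha> * z + \<beta>)))\<^sup>2 * fock_weight z \<le> R z" for z
  proof -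
    have "(cmod (f (\<alpha> * z + \<beta>)))\<^sup>2 * fock_weight z \<le> N\<^sup>2 * exp ((cmod (\<alpha> * z + \<beta>))\<^sup>2) * fock_weight z"
      using point_eval_sq[OF f] unfolding N_def by (simp add: mult_right_mono)
    also have "\<dots> = N\<^sup>2 / pi * exp ((cmod (\<alpha> * z + \<beta>))\<^sup>2 - (cmod z)\<^sup>2)"
      by (simp add: fock_weight_def exp_diff exp_minus field_simps)
    also have "\<dots> \<le> N\<^sup>2 / pi * exp (- d * (cmod z)\<^sup>2 + C)"
      using exponent_bound[OF a, of z] unfolding d_def[symmetric] C_def[symmetric]
      by (intro mult_left_mono) auto
    also have "\<dots> = R z"
    proof -
      have "exp (- d * (cmod z)\<^sup>2 + C) = exp C * exp (- d * (cmod z)\<^sup>2)"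
        by (simp add: exp_add[symmetric])
      then show ?thesis by (simp add: R_def)
    qed
    finally show ?thesis .
  qed
  have m: "(\<lambda>z. (cmod (f (\<alpha> * z + \<beta>)))\<^sup>2 * fock_weight z) \<in> borel_measurable lborel" by measurable
  have int: "integrable lborel (\<lambda>z. (cmod (f (\<alpha> * z + \<beta>)))\<^sup>2 * fock_weight z)"
    by (rule Bochner_Integration.integrable_bound[OF Rint m]) (use pw in \<open>auto intro!: AE_I2 simp: R_def\<close>)
  have hol: "(\<lambda>z. f (\<alpha> * z + \<beta>)) holomorphic_on UNIV"
    by (intro holomorphic_on_compose_gen[OF _ fock_space_holo[OF f], unfolded o_def] holomorphic_intros) auto
  show "(\<lambda>z. f (\<alpha> * z + \<beta>)) \<in> fock_space" by (rule fock_spaceI[OF hol int])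
  have "(\<integral>z. (cmod (f (\<alpha> * z + \<beta>)))\<^sup>2 * fock_weight z \<partial>lborel) \<le> (\<integral>z. R z \<partial>lborel)"
    by (rule integral_mono[OF int Rint]) (use pw in auto)
  also have "\<dots> = N\<^sup>2 * (exp C / d)" using Rval by simp
  finally have "sqrt (\<integral>z. (cmod (f (\<alpha> * z + \<beta>)))\<^sup>2 * fock_weight z \<partial>lborel) \<le> sqrt (N\<^sup>2 * (exp C / d))"
    by (rule real_sqrt_le_mono)
  also have "\<dots> = sqrt (N\<^sup>2) * sqrt (exp C / d)" by (rule real_sqrt_mult)
  also have "\<dots> = N * Mc \<rho> B"
    using fock_norm_nonneg[of f] by (simp add: Mc_def C_def d_def N_def)
  finally show "fock_norm (\<lambda>z. f (\<alpha> * z + \<beta>)) \<le> Mc \<rho> B * fock_norm f"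
    by (simp add: fock_norm_def N_def mult.commute)
qed

lemma repro_integral:
  assumes f: "f \<in> fock_space"
  shows "f v = (\<integral>u. f u * exp (v * cnj u) * complex_of_real (fock_weight u) \<partial>lborel)"
  using reproducing[OF f, of v] by (simp add: fock_inner_def fkern_def exp_cnj)

lemma adj_dil:
  assumes f: "f \<in> fock_space" and g: "g \<in> fock_space" and a: "cmod a < 1"
  shows "fock_inner (\<lambda>z. f (a * z)) g = fock_inner f (\<lambda>z. g (cnj a * z))"
proof -
  have fm[measurable]: "f \<in> borel_measurable borel" by (rule fock_space_meas[OF f])
  have gm[measurable]: "g \<in> borel_measurable borel" by (rule fock_space_meas[OF g])
  define \<rho> where "\<rho> = cmod a"
  have \<rho>1: "\<rho> < 1" and \<rho>0: "\<rho> \<ge> 0" using a by (auto simp: \<rho>_def)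
  define E where "E = (\<lambda>u::complex. complex_of_real (exp (\<rho> * (cmod u)\<^sup>2 / 2)))"
  have Em[measurable]: "E \<in> borel_measurable borel" unfolding E_def by measurable
  have E2: "(cmod (E u))\<^sup>2 * fock_weight u = exp (- (1 - \<rho>) * (cmod u)\<^sup>2) / pi" for u
  proof -
    have "(cmod (E u))\<^sup>2 = exp (\<rho> * (cmod u)\<^sup>2)"
      by (simp add: E_def power2_eq_square exp_add[symmetric])
    then show ?thesis
      by (simp add: fock_weight_def exp_add[symmetric] algebra_simps)
  qed
  have Esq: "sqint E"
    unfolding sqint_def E2 using gauss_integrable[of "1 - \<rho>"] \<rho>1 by simp
  define F1 where "F1 = (\<lambda>u. cmod (f u) * cmod (E u) * fock_weight u)"
  define F2 where "F2 = (\<lambda>u. cmod (g u) * cmod (E u) * fock_weight u)"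
  have F1i: "integrable lborel F1" unfolding F1_def by (rule cs_abs_integrable[OF fock_space_sqint[OF f] Esq])
  have F2i: "integrable lborel F2" unfolding F2_def by (rule cs_abs_integrable[OF fock_space_sqint[OF g] Esq])
  have F1m[measurable]: "F1 \<in> borel_measurable borel" unfolding F1_def by measurable
  have F2m[measurable]: "F2 \<in> borel_measurable borel" unfolding F2_def by measurable
  define H where "H = (\<lambda>u z. f u * exp (a * z * cnj u) * complex_of_real (fock_weight u) * (cnj (g z) * complex_of_real (fock_weight z)))"
  have Hm[measurable]: "(\<lambda>(u, z). H u z) \<in> borel_measurable (lborel \<Otimes>\<^sub>M lborel)"
    unfolding H_def by measurable
  have Hb: "norm (H u z) \<le> F1 u * F2 z" for u z
  proof -
    have "cmod (exp (a * z * cnj u)) = exp (Re (a * z * cnj u))" by (rule norm_exp_eq_Re)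
    also have "\<dots> \<le> exp (\<rho> * (cmod u)\<^sup>2 / 2) * exp (\<rho> * (cmod z)\<^sup>2 / 2)"
    proof -
      have "Re (a * z * cnj u) \<le> cmod (a * z * cnj u)" by (rule complex_Re_le_cmod)
      also have "\<dots> = \<rho> * (cmod z * cmod u)" by (simp add: norm_mult \<rho>_def)
      also have "\<dots> \<le> \<rho> * (((cmod u)\<^sup>2 + (cmod z)\<^sup>2) / 2)"
      proof (rule mult_left_mono[OF _ \<rho>0])
        have "0 \<le> (cmod u - cmod z)\<^sup>2" by simp
        then show "cmod z * cmod u \<le> ((cmod u)\<^sup>2 + (cmod z)\<^sup>2) / 2"
          by (simp add: power2_diff algebra_simps)
      qed
      finally have "Re (a * z * cnj u) \<le> \<rho> * (cmod u)\<^sup>2 / 2 + \<rho> * (cmod z)\<^sup>2 / 2"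
        by (simp add: algebra_simps)
      then show ?thesis by (simp add: exp_add[symmetric])
    qed
    finally have ex: "cmod (exp (a * z * cnj u)) \<le> exp (\<rho> * (cmod u)\<^sup>2 / 2) * exp (\<rho> * (cmod z)\<^sup>2 / 2)" .
    have "norm (H u z) = cmod (f u) * cmod (exp (a * z * cnj u)) * fock_weight u * (cmod (g z) * fock_weight z)"
      by (simp add: H_def norm_mult)
    also have "\<dots> \<le> cmod (f u) * (exp (\<rho> * (cmod u)\<^sup>2 / 2) * exp (\<rho> * (cmod z)\<^sup>2 / 2)) * fock_weight u * (cmod (g z) * fock_weight z)"
      by (intro mult_right_mono mult_left_mono ex) auto
    also have "\<dots> = F1 u * F2 z" by (simp add: F1_def F2_def E_def)
    finally show ?thesis .
  qed
  have Hint: "integrable (lborel \<Otimes>\<^sub>M lborel) (\<lambda>(u, z). H u z)"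
    unfolding integrable_iff_bounded
  proof
    show "(\<lambda>(u, z). H u z) \<in> borel_measurable (lborel \<Otimes>\<^sub>M lborel)" by (rule Hm)
    have "(\<integral>\<^sup>+p. ennreal (norm ((\<lambda>(u, z). H u z) p)) \<partial>(lborel \<Otimes>\<^sub>M lborel))
        \<le> (\<integral>\<^sup>+p. ennreal (F1 (fst p) * F2 (snd p)) \<partial>(lborel \<Otimes>\<^sub>M lborel))"
      by (intro nn_integral_mono) (auto intro!: ennreal_leI Hb)
    also have "\<dots> = (\<integral>\<^sup>+u. (\<integral>\<^sup>+z. ennreal (F1 u) * ennreal (F2 z) \<partial>lborel) \<partial>lborel)"
      by (subst lborel.nn_integral_fst[symmetric])
         (auto simp: F1_def F2_def ennreal_mult)
    also have "\<dots> = (\<integral>\<^sup>+u. ennreal (F1 u) \<partial>lborel) * (\<integral>\<^sup>+z. ennreal (F2 z) \<partial>lborel)"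
      by (simp add: nn_integral_cmult nn_integral_multc)
    also have "\<dots> < \<infinity>"
      using F1i F2i unfolding integrable_iff_bounded
      by (simp add: F1_def F2_def ennreal_mult_less_top)
    finally show "(\<integral>\<^sup>+p. ennreal (norm ((\<lambda>(u, z). H u z) p)) \<partial>(lborel \<Otimes>\<^sub>M lborel)) < \<infinity>" .
  qed
  have fub: "(\<integral>z. (\<integral>u. H u z \<partial>lborel) \<partial>lborel) = (\<integral>u. (\<integral>z. H u z \<partial>lborel) \<partial>lborel)"
    by (rule lborel_pair.Fubini_integral[OF Hint])
  have lhs: "(\<integral>z. (\<integral>u. H u z \<partial>lborel) \<partial>lborel) = fock_inner (\<lambda>z. f (a * z)) g"
  proof -
    have "(\<integral>u. H u z \<partial>lborel) = f (a * z) * cnj (g z) * complex_of_real (fock_weight z)" for z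
    proof -
      have "(\<integral>u. H u z \<partial>lborel) = (\<integral>u. f u * exp (a * z * cnj u) * complex_of_real (fock_weight u) \<partial>lborel)
              * (cnj (g z) * complex_of_real (fock_weight z))"
        unfolding H_def by (rule integral_mult_left_zero)
      also have "\<dots> = f (a * z) * (cnj (g z) * complex_of_real (fock_weight z))"
        using repro_integral[OF f, of "a * z"] by simp
      finally show ?thesis by (simp add: mult.assoc)
    qed
    then show ?thesis by (simp add: fock_inner_def)
  qed
  have rhs: "(\<integral>u. (\<integral>z. H u z \<partial>lborel) \<partial>lborel) = fock_inner f (\<lambda>z. g (cnj a * z))"
  proof -
    have "(\<integral>z. H u z \<partial>lborel) = f u * cnj (g (cnj a * u)) * complex_of_real (fock_weight u)" for u
    proof -
      have "(\<integral>z. H u z \<partial>lborel) = (f u * complex_of_real (fock_weight u)) *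
              (\<integral>z. cnj (g z * exp (cnj a * u * cnj z) * complex_of_real (fock_weight z)) \<partial>lborel)"
        unfolding H_def
        by (subst integral_mult_right_zero[symmetric])
           (intro Bochner_Integration.integral_cong refl, simp add: exp_cnj algebra_simps)
      also have "(\<integral>z. cnj (g z * exp (cnj a * u * cnj z) * complex_of_real (fock_weight z)) \<partial>lborel)
          = cnj (g (cnj a * u))"
        using repro_integral[OF g, of "cnj a * u"] by (simp only: Bochner_Integration.integral_cnj)
      finally show ?thesis by (simp add: algebra_simps)
    qed
    then show ?thesis by (simp add: fock_inner_def)
  qed
  show ?thesis using fub lhs rhs by simp
qed

lemma rot_in:
  assumes f: "f \<in> fock_space" and u: "cmod u = 1"
  shows "(\<lambda>z. f (u * z)) \<in> fock_space" and "fock_norm (\<lambda>z. f (u * z)) = fock_norm f"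
proof -
  have fm[measurable]: "f \<in> borel_measurable borel" by (rule fock_space_meas[OF f])
  define G where "G = (\<lambda>z. (cmod (f z))\<^sup>2 * fock_weight z)"
  have Gm[measurable]: "G \<in> borel_measurable borel" unfolding G_def by measurable
  have GT: "G (u * z) = (cmod (f (u * z)))\<^sup>2 * fock_weight z" for z
    by (simp add: G_def fock_weight_rot[OF u])
  have "integrable lborel G" using f by (simp add: fock_space_def G_def)
  then have "integrable lborel (\<lambda>z. G (u * z))" using integrable_rot[OF u Gm] by simp
  then have int: "integrable lborel (\<lambda>z. (cmod (f (u * z)))\<^sup>2 * fock_weight z)" unfolding GT .
  have hol: "(\<lambda>z. f (u * z)) holomorphic_on UNIV"
    by (intro holomorphic_on_compose_gen[OF _ fock_space_holo[OF f], unfolded o_def] holomorphic_intros) auto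
  show "(\<lambda>z. f (u * z)) \<in> fock_space" by (rule fock_spaceI[OF hol int])
  have "(\<integral>z. G (u * z) \<partial>lborel) = (\<integral>z. G z \<partial>lborel)" by (rule integral_rot[OF u Gm])
  then show "fock_norm (\<lambda>z. f (u * z)) = fock_norm f"
    unfolding GT by (simp add: fock_norm_def G_def)
qed

lemma adj_rot:
  assumes f: "f \<in> fock_space" and g: "g \<in> fock_space" and u: "cmod u = 1"
  shows "fock_inner (\<lambda>z. f (u * z)) g = fock_inner f (\<lambda>z. g (cnj u * z))"
proof -
  have fm[measurable]: "f \<in> borel_measurable borel" by (rule fock_space_meas[OF f])
  have gm[measurable]: "g \<in> borel_measurable borel" by (rule fock_space_meas[OF g])
  define F where "F = (\<lambda>z. f z * cnj (g (cnj u * z)) * complex_of_real (fock_weight z))"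
  have Fm[measurable]: "F \<in> borel_measurable borel" unfolding F_def by measurable
  have uu: "cnj u * u = 1"
  proof -
    have "cnj u * u = complex_of_real ((cmod u)\<^sup>2)"
      using complex_norm_square[of u] by (simp add: mult.commute del: of_real_power)
    then show ?thesis using u by simp
  qed
  have FT: "F (u * z) = f (u * z) * cnj (g z) * complex_of_real (fock_weight z)" for z
    by (simp add: F_def fock_weight_rot[OF u] mult.assoc[symmetric] uu)
  have "(\<integral>z. F (u * z) \<partial>lborel) = (\<integral>z. F z \<partial>lborel)" by (rule integral_rot[OF u Fm])
  then show ?thesis unfolding FT by (simp add: fock_inner_def F_def)
qed

lemma comp_dil:
  assumes f: "f \<in> fock_space" and a: "cmod \<alpha> \<le> \<rho>" "\<rho> < 1"
  shows "(\<lambda>z. f (\<alpha> * z)) \<in> fock_space"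
    and "fock_norm (\<lambda>z. f (\<alpha> * z)) \<le> Mc \<rho> 0 * fock_norm f"
  using comp_affine[OF f a, of 0 0] by simp_all

lemma step1:
  assumes f: "f \<in> fock_space" and a: "cmod a < 1"
  shows "(fock_norm (\<lambda>z. f (a * z)))\<^sup>2 \<le> fock_norm f * fock_norm (\<lambda>z. f (complex_of_real ((cmod a)\<^sup>2) * z))"
proof -
  define g where "g = (\<lambda>z. f (a * z))"
  have g: "g \<in> fock_space" unfolding g_def by (rule comp_dil(1)[OF f order_refl a])
  have h: "(\<lambda>z. g (cnj a * z)) = (\<lambda>z. f (complex_of_real ((cmod a)\<^sup>2) * z))"
    using complex_norm_square[of a] by (auto simp: g_def mult.assoc[symmetric] simp del: of_real_power)
  have "complex_of_real ((fock_norm g)\<^sup>2) = fock_inner g g" by (rule fock_inner_self[symmetric, OF fock_space_sqint[OF g]])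
  also have "\<dots> = fock_inner f (\<lambda>z. g (cnj a * z))" unfolding g_def
    by (rule adj_dil[OF f g[unfolded g_def] a])
  finally have "(fock_norm g)\<^sup>2 = cmod (fock_inner f (\<lambda>z. f (complex_of_real ((cmod a)\<^sup>2) * z)))"
    unfolding h by (metis norm_of_real abs_power2 power2_abs)
  also have "\<dots> \<le> fock_norm f * fock_norm (\<lambda>z. f (complex_of_real ((cmod a)\<^sup>2) * z))"
  proof (rule fock_cs[OF fock_space_sqint[OF f] fock_space_sqint])
    have "cmod (complex_of_real ((cmod a)\<^sup>2)) < 1"
    proof -
      have "(cmod a)\<^sup>2 < 1" using a by (simp add: power_less_one_iff abs_square_less_1)
      then show ?thesis by (simp del: of_real_power)
    qed
    then show "(\<lambda>z. f (complex_of_real ((cmod a)\<^sup>2) * z)) \<in> fock_space"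
      by (rule comp_dil(1)[OF f order_refl])
  qed
  finally show ?thesis unfolding g_def .
qed

lemma power_growth_contra:
  fixes s M :: real
  assumes s1: "s > 1" and b: "\<And>n. s ^ (2 ^ n) \<le> M"
  shows False
proof -
  obtain n :: nat where n: "M / (s - 1) < real n" using reals_Archimedean2 by blast
  have "1 + real (2 ^ n) * (s - 1) \<le> (1 + (s - 1)) ^ (2 ^ n)"
    by (rule Bernoulli_inequality) (use s1 in simp)
  then have "1 + real (2 ^ n) * (s - 1) \<le> M" using b[of n] by simp
  moreover have "real n \<le> real (2 ^ n)"
    using less_exp[of n] by linarith
  then have "real n * (s - 1) \<le> real (2 ^ n) * (s - 1)" using s1 by (simp add: mult_right_mono)
  moreover have "M < real n * (s - 1)" using n s1 by (simp add: pos_divide_less_eq)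
  ultimately show False by linarith
qed

lemma contr_real:
  assumes f: "f \<in> fock_space" and r: "0 \<le> r" "r < 1"
  shows "fock_norm (\<lambda>z. f (complex_of_real r * z)) \<le> fock_norm f"
proof (rule ccontr)
  define N where "N = fock_norm f"
  define t where "t = (\<lambda>n::nat. fock_norm (\<lambda>z. f (complex_of_real (r ^ (2 ^ n)) * z)))"
  assume "\<not> fock_norm (\<lambda>z. f (complex_of_real r * z)) \<le> fock_norm f"
  then have gt: "t 0 > N" by (simp add: t_def N_def)
  have N0: "N \<ge> 0" by (simp add: N_def fock_norm_nonneg)
  have t0: "t n \<ge> 0" for n by (simp add: t_def fock_norm_nonneg)
  have rn: "r ^ (2 ^ n) \<le> r" for n
    using power_decreasing[of 1 "2 ^ n" r] r by simp
  have rn0: "0 \<le> r ^ (2 ^ n)" for n using r by simp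
  have step: "(t n)\<^sup>2 \<le> N * t (Suc n)" for n
  proof -
    have "cmod (complex_of_real (r ^ (2 ^ n))) < 1" using rn[of n] rn0[of n] r by (simp del: of_real_power)
    note st = step1[OF f this]
    have e: "(cmod (complex_of_real (r ^ (2 ^ n))))\<^sup>2 = r ^ (2 ^ Suc n)"
    proof -
      have "(cmod (complex_of_real (r ^ (2 ^ n))))\<^sup>2 = (r ^ (2 ^ n))\<^sup>2"
        using rn0[of n] by (simp del: of_real_power)
      also have "\<dots> = r ^ (2 ^ Suc n)" by (simp add: power_mult[symmetric] mult.commute)
      finally show ?thesis .
    qed
    from st show ?thesis unfolding e t_def N_def .
  qed
  have bnd: "t n \<le> Mc r 0 * N" for n
    unfolding t_def N_def by (rule comp_dil(2)[OF f _ r(2)]) (use rn rn0 in \<open>simp del: of_real_power\<close>)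
  show False
  proof (cases "N = 0")
    case True
    then have "(t 0)\<^sup>2 \<le> 0" using step[of 0] by simp
    then have "t 0 = 0" by simp
    then show False using gt True by simp
  next
    case False
    then have Np: "N > 0" using N0 by simp
    define q where "q = (\<lambda>n. t n / N)"
    have qs: "(q n)\<^sup>2 \<le> q (Suc n)" for n
    proof -
      have "(t n)\<^sup>2 / N\<^sup>2 \<le> N * t (Suc n) / N\<^sup>2" using step[of n] Np by (simp add: divide_right_mono)
      then show ?thesis using Np by (simp add: q_def power_divide power2_eq_square)
    qed
    have q0: "q n \<ge> 0" for n using t0[of n] Np by (simp add: q_def)
    have pw: "(q 0) ^ (2 ^ n) \<le> q n" for n
    proof (induction n)
      case 0 then show ?case by simp
    next
      case (Suc n)
      have "(q 0) ^ (2 ^ Suc n) = ((q 0) ^ (2 ^ n))\<^sup>2" by (simp add: power_mult[symmetric] mult.commute)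
      also have "\<dots> \<le> (q n)\<^sup>2" using Suc.IH q0[of 0] by (intro power_mono) auto
      also have "\<dots> \<le> q (Suc n)" by (rule qs)
      finally show ?case .
    qed
    have "q 0 > 1" using gt Np by (simp add: q_def)
    moreover have "(q 0) ^ (2 ^ n) \<le> Mc r 0" for n
    proof -
      have "q n \<le> Mc r 0" using bnd[of n] Np by (simp add: q_def pos_divide_le_eq)
      then show ?thesis using pw[of n] by linarith
    qed
    ultimately show False by (rule power_growth_contra)
  qed
qed

lemma contr:
  assumes f: "f \<in> fock_space" and a: "cmod a < 1"
  shows "fock_norm (\<lambda>z. f (a * z)) \<le> fock_norm f"
proof -
  have "(cmod a)\<^sup>2 < 1" using a by (simp add: power_less_one_iff abs_square_less_1)
  then have c: "fock_norm (\<lambda>z. f (complex_of_real ((cmod a)\<^sup>2) * z)) \<le> fock_norm f"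
    by (intro contr_real[OF f]) auto
  have "(fock_norm (\<lambda>z. f (a * z)))\<^sup>2 \<le> fock_norm f * fock_norm (\<lambda>z. f (complex_of_real ((cmod a)\<^sup>2) * z))"
    by (rule step1[OF f a])
  also have "\<dots> \<le> fock_norm f * fock_norm f"
    using c fock_norm_nonneg[of f] by (simp add: mult_left_mono)
  finally have "(fock_norm (\<lambda>z. f (a * z)))\<^sup>2 \<le> (fock_norm f)\<^sup>2" by (simp add: power2_eq_square)
  then show ?thesis using fock_norm_nonneg[of f] by (rule power2_le_imp_le)
qed

lemma dil_le1:
  assumes f: "f \<in> fock_space" and a: "cmod a \<le> 1"
  shows "(\<lambda>z. f (a * z)) \<in> fock_space" and "fock_norm (\<lambda>z. f (a * z)) \<le> fock_norm f"
proof -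
  show "(\<lambda>z. f (a * z)) \<in> fock_space"
  proof (cases "cmod a = 1")
    case True then show ?thesis by (rule rot_in(1)[OF f])
  next
    case False then show ?thesis using a by (intro comp_dil(1)[OF f order_refl]) simp
  qed
  show "fock_norm (\<lambda>z. f (a * z)) \<le> fock_norm f"
  proof (cases "cmod a = 1")
    case True then show ?thesis using rot_in(2)[OF f True] by simp
  next
    case False then show ?thesis using a by (intro contr[OF f]) simp
  qed
qed

lemma adj_le1:
  assumes f: "f \<in> fock_space" and g: "g \<in> fock_space" and a: "cmod a \<le> 1"
  shows "fock_inner (\<lambda>z. f (a * z)) g = fock_inner f (\<lambda>z. g (cnj a * z))"
proof (cases "cmod a = 1")
  case True then show ?thesis by (rule adj_rot[OF f g])
next
  case False then show ?thesis using a by (intro adj_dil[OF f g]) simp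
qed

lemma series_cs:
  fixes a x :: "nat \<Rightarrow> real"
  assumes a0: "\<And>n. a n \<ge> 0" and x0: "\<And>n. x n \<ge> 0" and sa: "summable a"
    and sax2: "summable (\<lambda>n. a n * (x n)\<^sup>2)" and sax: "summable (\<lambda>n. a n * x n)"
  shows "(\<Sum>n. a n * x n)\<^sup>2 \<le> (\<Sum>n. a n) * (\<Sum>n. a n * (x n)\<^sup>2)"
proof (rule LIMSEQ_le_const2)
  show "(\<lambda>N. (\<Sum>n<N. a n * x n)\<^sup>2) \<longlonglongrightarrow> (\<Sum>n. a n * x n)\<^sup>2"
    by (intro tendsto_power summable_LIMSEQ sax)
  show "\<exists>N. \<forall>n\<ge>N. (\<Sum>i<n. a i * x i)\<^sup>2 \<le> (\<Sum>n. a n) * (\<Sum>n. a n * (x n)\<^sup>2)"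
  proof (intro exI allI impI)
    fix N :: nat
    have "(\<Sum>i<N. a i * x i)\<^sup>2 = (\<Sum>i<N. sqrt (a i) * (sqrt (a i) * x i))\<^sup>2"
      using a0 by (simp add: mult.assoc[symmetric])
    also have "\<dots> \<le> (\<Sum>i<N. (sqrt (a i))\<^sup>2) * (\<Sum>i<N. (sqrt (a i) * x i)\<^sup>2)"
      by (rule Cauchy_Schwarz_ineq_sum)
    also have "\<dots> = (\<Sum>i<N. a i) * (\<Sum>i<N. a i * (x i)\<^sup>2)"
      using a0 by (simp add: power_mult_distrib)
    also have "\<dots> \<le> (\<Sum>n. a n) * (\<Sum>n. a n * (x n)\<^sup>2)"
    proof (rule mult_mono)
      show "(\<Sum>i<N. a i) \<le> (\<Sum>n. a n)" using a0 sa by (intro sum_le_suminf) auto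
      show "(\<Sum>i<N. a i * (x i)\<^sup>2) \<le> (\<Sum>n. a n * (x n)\<^sup>2)" using a0 sax2 by (intro sum_le_suminf) auto
      show "0 \<le> (\<Sum>n. a n)" using a0 sa by (intro suminf_nonneg) auto
      show "0 \<le> (\<Sum>i<N. a i * (x i)\<^sup>2)" using a0 by (intro sum_nonneg) auto
    qed
    finally show "(\<Sum>i<N. a i * x i)\<^sup>2 \<le> (\<Sum>n. a n) * (\<Sum>n. a n * (x n)\<^sup>2)" .
  qed
qed

definition iter_ok :: "(complex \<Rightarrow> complex) \<Rightarrow> real \<Rightarrow> bool" where
  "iter_ok \<psi> M \<longleftrightarrow> M \<ge> 0 \<and> (\<forall>n f. f \<in> fock_space \<longrightarrow>
      (\<lambda>z. f ((\<psi> ^^ n) z)) \<in> fock_space \<and> fock_norm (\<lambda>z. f ((\<psi> ^^ n) z)) \<le> M * fock_norm f)"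

definition resolv :: "(complex \<Rightarrow> complex) \<Rightarrow> complex \<Rightarrow> fock_op" where
  "resolv \<psi> c g = (\<lambda>z. - (\<Sum>n. (1 / c) ^ Suc n * g ((\<psi> ^^ n) z)))"

lemma iter_okD:
  assumes "iter_ok \<psi> M" "f \<in> fock_space"
  shows "(\<lambda>z. f ((\<psi> ^^ n) z)) \<in> fock_space" "fock_norm (\<lambda>z. f ((\<psi> ^^ n) z)) \<le> M * fock_norm f" "M \<ge> 0"
  using assms by (auto simp: iter_ok_def)

lemma iter_pt:
  assumes ok: "iter_ok \<psi> M" and f: "f \<in> fock_space"
  shows "cmod (f ((\<psi> ^^ n) z)) \<le> M * fock_norm f * exp ((cmod z)\<^sup>2 / 2)"
proof -
  have "cmod (f ((\<psi> ^^ n) z)) \<le> fock_norm (\<lambda>z. f ((\<psi> ^^ n) z)) * exp ((cmod z)\<^sup>2 / 2)"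
    using point_eval[OF iter_okD(1)[OF ok f, of n], of z] by simp
  also have "\<dots> \<le> M * fock_norm f * exp ((cmod z)\<^sup>2 / 2)"
    using iter_okD(2)[OF ok f] by (intro mult_right_mono) auto
  finally show ?thesis .
qed

lemma iter_summable:
  assumes ok: "iter_ok \<psi> M" and f: "f \<in> fock_space" and c: "cmod c > 1"
  shows "summable (\<lambda>n. cmod ((1 / c) ^ k * (1 / c) ^ n * f ((\<psi> ^^ n) z)))"
proof (rule summable_comparison_test)
  have q: "cmod (1 / c) < 1" using c by (simp add: norm_divide divide_less_eq)
  show "summable (\<lambda>n. (cmod (1 / c) ^ k * M * fock_norm f * exp ((cmod z)\<^sup>2 / 2)) * cmod (1 / c) ^ n)"
    by (intro summable_mult summable_geometric) (use q in simp)
  show "\<exists>N. \<forall>n\<ge>N. norm (cmod ((1 / c) ^ k * (1 / c) ^ n * f ((\<psi> ^^ n) z)))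
      \<le> (cmod (1 / c) ^ k * M * fock_norm f * exp ((cmod z)\<^sup>2 / 2)) * cmod (1 / c) ^ n"
  proof (intro exI allI impI)
    fix n
    have "cmod ((1 / c) ^ k * (1 / c) ^ n * f ((\<psi> ^^ n) z))
        = cmod (1 / c) ^ k * cmod (1 / c) ^ n * cmod (f ((\<psi> ^^ n) z))" by (simp add: norm_mult norm_power)
    also have "\<dots> \<le> cmod (1 / c) ^ k * cmod (1 / c) ^ n * (M * fock_norm f * exp ((cmod z)\<^sup>2 / 2))"
      by (intro mult_left_mono iter_pt[OF ok f]) auto
    finally show "norm (cmod ((1 / c) ^ k * (1 / c) ^ n * f ((\<psi> ^^ n) z)))
      \<le> (cmod (1 / c) ^ k * M * fock_norm f * exp ((cmod z)\<^sup>2 / 2)) * cmod (1 / c) ^ n"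
      by (simp add: algebra_simps)
  qed
qed

lemma iter_summable1:
  assumes ok: "iter_ok \<psi> M" and f: "f \<in> fock_space" and c: "cmod c > 1"
  shows "summable (\<lambda>n. (1 / c) ^ Suc n * f ((\<psi> ^^ n) z))"
  using summable_norm_cancel[OF iter_summable[OF ok f c, of 1 z]] by (simp add: power_Suc)

lemma iter_summable0:
  assumes ok: "iter_ok \<psi> M" and f: "f \<in> fock_space" and c: "cmod c > 1"
  shows "summable (\<lambda>n. (1 / c) ^ n * f ((\<psi> ^^ n) z))"
  using summable_norm_cancel[OF iter_summable[OF ok f c, of 0 z]] by simp

lemma resolv_holo:
  assumes ok: "iter_ok \<psi> M" and f: "f \<in> fock_space" and c: "cmod c > 1"
  shows "resolv \<psi> c f holomorphic_on UNIV"
proof -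
  define t where "t = (\<lambda>n z. (1 / c) ^ Suc n * f ((\<psi> ^^ n) z))"
  have th: "t n holomorphic_on UNIV" for n
    unfolding t_def by (intro holomorphic_intros fock_space_holo[OF iter_okD(1)[OF ok f]])
  have q: "cmod (1 / c) < 1" using c by (simp add: norm_divide divide_less_eq)
  have "\<exists>G G'. \<forall>x \<in> UNIV. ((\<lambda>n. t n x) sums G x) \<and> ((\<lambda>n. deriv (t n) x) sums G' x) \<and> (G has_field_derivative G' x) (at x)"
  proof (rule series_and_derivative_comparison_local)
    show "open (UNIV :: complex set)" by simp
    show "\<And>n x. x \<in> UNIV \<Longrightarrow> (t n has_field_derivative deriv (t n) x) (at x)"
      by (rule holomorphic_derivI[OF th]) auto
    fix x :: complex
    define h where "h = (\<lambda>n. cmod (1 / c) ^ Suc n * (M * fock_norm f * exp ((cmod x + 1)\<^sup>2 / 2)))"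
    have hs: "summable h" unfolding h_def
      by (intro summable_mult2) (use q summable_geometric[of "cmod (1/c)"] in \<open>simp add: summable_mult\<close>)
    have hb: "\<forall>\<^sub>F n in sequentially. \<forall>y\<in>ball x 1 \<inter> UNIV. norm (t n y) \<le> h n"
    proof (intro always_eventually allI ballI)
      fix n y assume y: "y \<in> ball x 1 \<inter> UNIV"
      have "cmod y \<le> cmod x + 1" using y norm_triangle_ineq2[of y x] by (auto simp: dist_norm norm_minus_commute)
      then have "(cmod y)\<^sup>2 \<le> (cmod x + 1)\<^sup>2" by (simp add: power_mono)
      then have e: "exp ((cmod y)\<^sup>2 / 2) \<le> exp ((cmod x + 1)\<^sup>2 / 2)" by simp
      have M0: "M * fock_norm f \<ge> 0" using iter_okD(3)[OF ok f] fock_norm_nonneg[of f] by simp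
      have "norm (t n y) = cmod (1 / c) ^ Suc n * cmod (f ((\<psi> ^^ n) y))"
        unfolding t_def by (simp only: norm_mult norm_power)
      also have "\<dots> \<le> cmod (1 / c) ^ Suc n * (M * fock_norm f * exp ((cmod y)\<^sup>2 / 2))"
        by (intro mult_left_mono iter_pt[OF ok f]) auto
      also have "\<dots> \<le> h n" unfolding h_def
        by (intro mult_left_mono e M0) auto
      finally show "norm (t n y) \<le> h n" .
    qed
    show "\<exists>d h. 0 < d \<and> summable h \<and> (\<forall>\<^sub>F n in sequentially. \<forall>y\<in>ball x d \<inter> UNIV. norm (t n y) \<le> h n)"
      using hs hb by (intro exI[of _ 1] exI[of _ h]) auto
  qed
  then obtain G G' where G: "\<And>x. (\<lambda>n. t n x) sums G x" "\<And>x. (G has_field_derivative G' x) (at x)"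
    by blast
  have eq: "resolv \<psi> c f = (\<lambda>z. - G z)"
    using G(1) by (auto simp: resolv_def t_def sums_unique[symmetric] intro!: ext)
  have "G holomorphic_on UNIV"
    unfolding holomorphic_on_def field_differentiable_def using G(2) has_field_derivative_at_within by blast
  then show ?thesis unfolding eq by (intro holomorphic_intros)
qed

lemma resolv_in:
  assumes ok: "iter_ok \<psi> M" and f: "f \<in> fock_space" and c: "cmod c > 1"
  shows "resolv \<psi> c f \<in> fock_space"
    and "fock_norm (resolv \<psi> c f) \<le> M * (\<Sum>n. cmod (1 / c) ^ Suc n) * fock_norm f"
proof -
  have q: "cmod (1 / c) < 1" using c by (simp add: norm_divide divide_less_eq)
  define a where "a = (\<lambda>n. cmod (1 / c) ^ Suc n)"
  define A where "A = (\<Sum>n. a n)"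
  define N where "N = fock_norm f"
  have M0: "M \<ge> 0" using iter_okD(3)[OF ok f] .
  have N0: "N \<ge> 0" by (simp add: N_def fock_norm_nonneg)
  have a0: "a n \<ge> 0" for n by (simp add: a_def)
  have sa: "summable a" unfolding a_def using q by (simp add: summable_geometric summable_mult)
  have A0: "A \<ge> 0" unfolding A_def using a0 sa by (intro suminf_nonneg) auto
  define x where "x = (\<lambda>n z. cmod (f ((\<psi> ^^ n) z)))"
  have x0: "x n z \<ge> 0" for n z by (simp add: x_def)
  have fi: "\<And>n. (\<lambda>z. f ((\<psi> ^^ n) z)) \<in> fock_space" by (rule iter_okD(1)[OF ok f])
  have fim[measurable]: "\<And>n. (\<lambda>z. f ((\<psi> ^^ n) z)) \<in> borel_measurable borel" by (rule fock_space_meas[OF fi])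
  have xb: "x n z \<le> M * N * exp ((cmod z)\<^sup>2 / 2)" for n z unfolding x_def N_def by (rule iter_pt[OF ok f])
  have e1: "cmod ((1 / c) ^ 1 * (1 / c) ^ n * f ((\<psi> ^^ n) z)) = a n * x n z" for n z
    by (simp only: norm_mult norm_power a_def x_def power_Suc power_one_right)
  have e2: "norm ((1 / c) ^ Suc n * f ((\<psi> ^^ n) z)) = a n * x n z" for n z
    by (simp only: norm_mult norm_power a_def x_def)
  have sax: "summable (\<lambda>n. a n * x n z)" for z
    using iter_summable[OF ok f c, of 1 z] unfolding e1 .
  have sax2: "summable (\<lambda>n. a n * (x n z)\<^sup>2)" for z
  proof (rule summable_comparison_test)
    show "summable (\<lambda>n. a n * (M * N * exp ((cmod z)\<^sup>2 / 2))\<^sup>2)" using sa by (rule summable_mult2)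
    show "\<exists>N'. \<forall>n\<ge>N'. norm (a n * (x n z)\<^sup>2) \<le> a n * (M * N * exp ((cmod z)\<^sup>2 / 2))\<^sup>2"
    proof (intro exI allI impI)
      fix n :: nat
      have "(x n z)\<^sup>2 \<le> (M * N * exp ((cmod z)\<^sup>2 / 2))\<^sup>2" using x0 xb by (intro power_mono)
      then have "a n * (x n z)\<^sup>2 \<le> a n * (M * N * exp ((cmod z)\<^sup>2 / 2))\<^sup>2" using a0 by (rule mult_left_mono)
      then show "norm (a n * (x n z)\<^sup>2) \<le> a n * (M * N * exp ((cmod z)\<^sup>2 / 2))\<^sup>2" using a0[of n] by simp
    qed
  qed
  have pw: "(cmod (resolv \<psi> c f z))\<^sup>2 \<le> A * (\<Sum>n. a n * (x n z)\<^sup>2)" for z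
  proof -
    have sn: "summable (\<lambda>n. norm ((1 / c) ^ Suc n * f ((\<psi> ^^ n) z)))"
      unfolding e2 by (rule sax)
    have "cmod (resolv \<psi> c f z) = norm (\<Sum>n. (1 / c) ^ Suc n * f ((\<psi> ^^ n) z))"
      by (simp add: resolv_def)
    also have "\<dots> \<le> (\<Sum>n. norm ((1 / c) ^ Suc n * f ((\<psi> ^^ n) z)))" by (rule summable_norm[OF sn])
    also have "\<dots> = (\<Sum>n. a n * x n z)" unfolding e2 ..
    finally have le: "cmod (resolv \<psi> c f z) \<le> (\<Sum>n. a n * x n z)" .
    then have "(cmod (resolv \<psi> c f z))\<^sup>2 \<le> (\<Sum>n. a n * x n z)\<^sup>2" by (simp add: power_mono)
    also have "\<dots> \<le> A * (\<Sum>n. a n * (x n z)\<^sup>2)"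
      unfolding A_def by (rule series_cs[OF a0 x0 sa sax2 sax])
    finally show ?thesis .
  qed
  define F where "F = (\<lambda>n z. a n * ((x n z)\<^sup>2 * fock_weight z))"
  have Fi: "integrable lborel (F n)" for n
    using fi[of n] unfolding F_def x_def by (auto simp: fock_space_def)
  have Fint: "(\<integral>z. F n z \<partial>lborel) = a n * (fock_norm (\<lambda>z. f ((\<psi> ^^ n) z)))\<^sup>2" for n
    unfolding F_def x_def by (simp add: fock_norm_sq)
  have Fnb': "(\<integral>z. F n z \<partial>lborel) \<le> a n * (M * N)\<^sup>2" for n
  proof -
    have "fock_norm (\<lambda>z. f ((\<psi> ^^ n) z)) \<le> M * N" using iter_okD(2)[OF ok f, of n] by (simp add: N_def)
    then have "(fock_norm (\<lambda>z. f ((\<psi> ^^ n) z)))\<^sup>2 \<le> (M * N)\<^sup>2"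
      using fock_norm_nonneg by (intro power_mono) auto
    then show ?thesis unfolding Fint using a0[of n] by (rule mult_left_mono)
  qed
  have Fnn: "(\<integral>z. norm (F n z) \<partial>lborel) = (\<integral>z. F n z \<partial>lborel)" for n
    using a0 by (intro Bochner_Integration.integral_cong) (auto simp: F_def)
  have Fnb: "(\<integral>z. norm (F n z) \<partial>lborel) \<le> a n * (M * N)\<^sup>2" for n
    unfolding Fnn by (rule Fnb')
  have sF: "summable (\<lambda>n. norm (F n z))" for z
  proof -
    have "summable (\<lambda>n. a n * (x n z)\<^sup>2 * fock_weight z)" by (rule summable_mult2[OF sax2])
    then show ?thesis using a0 by (simp add: F_def mult.assoc)
  qed
  have sFi: "summable (\<lambda>n. (\<integral>z. norm (F n z) \<partial>lborel))"
  proof (rule summable_comparison_test)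
    show "summable (\<lambda>n. a n * (M * N)\<^sup>2)" using sa by (rule summable_mult2)
    show "\<exists>N'. \<forall>n\<ge>N'. norm (\<integral>z. norm (F n z) \<partial>lborel) \<le> a n * (M * N)\<^sup>2"
    proof (intro exI allI impI)
      fix n :: nat
      have "0 \<le> (\<integral>z. norm (F n z) \<partial>lborel)" by (rule integral_nonneg_AE) simp
      then show "norm (\<integral>z. norm (F n z) \<partial>lborel) \<le> a n * (M * N)\<^sup>2" using Fnb[of n] by simp
    qed
  qed
  have Si: "integrable lborel (\<lambda>z. (\<Sum>n. F n z))"
    by (rule integrable_suminf[OF Fi _ sFi]) (use sF in simp)
  have Sv: "(\<integral>z. (\<Sum>n. F n z) \<partial>lborel) = (\<Sum>n. (\<integral>z. F n z \<partial>lborel))"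
    by (rule integral_suminf[OF Fi _ sFi]) (use sF in simp)
  have Sb: "(\<Sum>n. (\<integral>z. F n z \<partial>lborel)) \<le> A * (M * N)\<^sup>2"
  proof -
    have "(\<Sum>n. (\<integral>z. F n z \<partial>lborel)) \<le> (\<Sum>n. a n * (M * N)\<^sup>2)"
    proof (rule suminf_le)
      show "\<And>n. (\<integral>z. F n z \<partial>lborel) \<le> a n * (M * N)\<^sup>2" by (rule Fnb')
      show "summable (\<lambda>n. (\<integral>z. F n z \<partial>lborel))"
        by (rule summable_integral[OF Fi _ sFi]) (use sF in simp)
      show "summable (\<lambda>n. a n * (M * N)\<^sup>2)" using sa by (rule summable_mult2)
    qed
    also have "\<dots> = A * (M * N)\<^sup>2" unfolding A_def using sa by (rule suminf_mult2[symmetric])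
    finally show ?thesis .
  qed
  have Rm[measurable]: "resolv \<psi> c f \<in> borel_measurable borel"
    by (rule holo_measurable[OF resolv_holo[OF ok f c]])
  have pw2: "(cmod (resolv \<psi> c f z))\<^sup>2 * fock_weight z \<le> A * (\<Sum>n. F n z)" for z
  proof -
    have "(cmod (resolv \<psi> c f z))\<^sup>2 * fock_weight z \<le> A * (\<Sum>n. a n * (x n z)\<^sup>2) * fock_weight z"
      using pw[of z] by (simp add: mult_right_mono)
    also have "\<dots> = A * (\<Sum>n. a n * (x n z)\<^sup>2 * fock_weight z)"
      using suminf_mult2[OF sax2[of z], of "fock_weight z"] by (simp add: mult.assoc)
    also have "\<dots> = A * (\<Sum>n. F n z)" by (simp add: F_def mult.assoc)
    finally show ?thesis .
  qed
  have int: "integrable lborel (\<lambda>z. (cmod (resolv \<psi> c f z))\<^sup>2 * fock_weight z)"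
  proof (rule Bochner_Integration.integrable_bound)
    show "integrable lborel (\<lambda>z. A * (\<Sum>n. F n z))" using Si by simp
    show "(\<lambda>z. (cmod (resolv \<psi> c f z))\<^sup>2 * fock_weight z) \<in> borel_measurable lborel" by measurable
    show "AE z in lborel. norm ((cmod (resolv \<psi> c f z))\<^sup>2 * fock_weight z) \<le> norm (A * (\<Sum>n. F n z))"
    proof (rule AE_I2)
      fix z
      have "0 \<le> (\<Sum>n. F n z)" using sF[of z] a0 by (intro suminf_nonneg) (auto simp: F_def)
      then show "norm ((cmod (resolv \<psi> c f z))\<^sup>2 * fock_weight z) \<le> norm (A * (\<Sum>n. F n z))"
        using pw2[of z] A0 by simp
    qed
  qed
  show "resolv \<psi> c f \<in> fock_space"
    by (rule fock_spaceI[OF resolv_holo[OF ok f c] int])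
  have "(fock_norm (resolv \<psi> c f))\<^sup>2 \<le> A * (A * (M * N)\<^sup>2)"
  proof -
    have "(fock_norm (resolv \<psi> c f))\<^sup>2 = (\<integral>z. (cmod (resolv \<psi> c f z))\<^sup>2 * fock_weight z \<partial>lborel)"
      by (rule fock_norm_sq)
    also have "\<dots> \<le> (\<integral>z. A * (\<Sum>n. F n z) \<partial>lborel)"
      by (rule integral_mono[OF int]) (use Si pw2 in auto)
    also have "\<dots> = A * (\<Sum>n. (\<integral>z. F n z \<partial>lborel))" using Sv by simp
    also have "\<dots> \<le> A * (A * (M * N)\<^sup>2)" using Sb A0 by (rule mult_left_mono)
    finally show ?thesis .
  qed
  also have "\<dots> = (M * A * N)\<^sup>2" by (simp add: power2_eq_square algebra_simps)
  finally have "(fock_norm (resolv \<psi> c f))\<^sup>2 \<le> (M * A * N)\<^sup>2" .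
  moreover have "0 \<le> M * A * N" using M0 A0 N0 by simp
  ultimately have "fock_norm (resolv \<psi> c f) \<le> M * A * N"
    by (rule power2_le_imp_le)
  then show "fock_norm (resolv \<psi> c f) \<le> M * (\<Sum>n. cmod (1 / c) ^ Suc n) * fock_norm f"
    unfolding A_def a_def N_def .
qed

lemma resolv_add:
  assumes ok: "iter_ok \<psi> M" and f: "f \<in> fock_space" and g: "g \<in> fock_space" and c: "cmod c > 1"
  shows "resolv \<psi> c (\<lambda>z. f z + g z) = (\<lambda>z. resolv \<psi> c f z + resolv \<psi> c g z)"
proof
  fix z
  have e: "(\<Sum>n. (1 / c) ^ Suc n * (f ((\<psi> ^^ n) z) + g ((\<psi> ^^ n) z)))
      = (\<Sum>n. (1 / c) ^ Suc n * f ((\<psi> ^^ n) z)) + (\<Sum>n. (1 / c) ^ Suc n * g ((\<psi> ^^ n) z))"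
    unfolding distrib_left
    by (rule suminf_add[OF iter_summable1[OF ok f c] iter_summable1[OF ok g c], symmetric])
  show "resolv \<psi> c (\<lambda>z. f z + g z) z = resolv \<psi> c f z + resolv \<psi> c g z"
    unfolding resolv_def e by simp
qed

lemma resolv_scale:
  assumes ok: "iter_ok \<psi> M" and f: "f \<in> fock_space" and c: "cmod c > 1"
  shows "resolv \<psi> c (\<lambda>z. d * f z) = (\<lambda>z. d * resolv \<psi> c f z)"
proof
  fix z
  have "(\<Sum>n. d * ((1 / c) ^ Suc n * f ((\<psi> ^^ n) z))) = d * (\<Sum>n. (1 / c) ^ Suc n * f ((\<psi> ^^ n) z))"
    by (rule suminf_mult[OF iter_summable1[OF ok f c]])
  then show "resolv \<psi> c (\<lambda>z. d * f z) z = d * resolv \<psi> c f z"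
    by (simp add: resolv_def algebra_simps)
qed

lemma resolv_left:
  assumes ok: "iter_ok \<psi> M" and f: "f \<in> fock_space" and c: "cmod c > 1"
  shows "resolv \<psi> c (\<lambda>z. comp_op \<psi> f z - c * f z) = f"
proof
  fix z
  have c0: "c \<noteq> 0" using c by auto
  define b where "b = (\<lambda>n. (1 / c) ^ n * f ((\<psi> ^^ n) z))"
  have b0: "b \<longlonglongrightarrow> 0" unfolding b_def by (rule summable_LIMSEQ_zero[OF iter_summable0[OF ok f c]])
  have t: "(1 / c) ^ Suc n * (comp_op \<psi> f ((\<psi> ^^ n) z) - c * f ((\<psi> ^^ n) z)) = b (Suc n) - b n" for n
    using c0 by (simp add: b_def comp_op_def algebra_simps)
  have "(\<lambda>n. b (Suc n) - b n) sums (0 - b 0)" by (rule telescope_sums[OF b0])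
  then have "(\<Sum>n. (1 / c) ^ Suc n * (comp_op \<psi> f ((\<psi> ^^ n) z) - c * f ((\<psi> ^^ n) z))) = - f z"
    unfolding t by (simp add: b_def sums_iff)
  then show "resolv \<psi> c (\<lambda>z. comp_op \<psi> f z - c * f z) z = f z"
    by (simp add: resolv_def)
qed

lemma resolv_right:
  assumes ok: "iter_ok \<psi> M" and f: "f \<in> fock_space" and c: "cmod c > 1"
  shows "(\<lambda>z. comp_op \<psi> (resolv \<psi> c f) z - c * resolv \<psi> c f z) = f"
proof
  fix z
  have c0: "c \<noteq> 0" using c by auto
  define b where "b = (\<lambda>n. (1 / c) ^ n * f ((\<psi> ^^ n) z))"
  have sb: "summable b" unfolding b_def by (rule iter_summable0[OF ok f c])
  have e1: "(1 / c) ^ Suc n * f ((\<psi> ^^ n) (\<psi> z)) = b (Suc n)" for n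
    by (simp only: b_def funpow_Suc_right comp_apply)
  have e2: "c * ((1 / c) ^ Suc n * f ((\<psi> ^^ n) z)) = b n" for n
    using c0 by (simp add: b_def)
  have "comp_op \<psi> (resolv \<psi> c f) z = - (\<Sum>n. b (Suc n))"
    unfolding comp_op_def resolv_def e1 ..
  also have "\<dots> = - (suminf b - b 0)" by (simp add: suminf_split_head[OF sb])
  finally have A: "comp_op \<psi> (resolv \<psi> c f) z = - (suminf b - b 0)" .
  have "c * resolv \<psi> c f z = - (\<Sum>n. c * ((1 / c) ^ Suc n * f ((\<psi> ^^ n) z)))"
    unfolding resolv_def suminf_mult[OF iter_summable1[OF ok f c]] by simp
  also have "\<dots> = - suminf b" by (simp only: e2)
  finally have B: "c * resolv \<psi> c f z = - suminf b" .
  show "comp_op \<psi> (resolv \<psi> c f) z - c * resolv \<psi> c f z = f z"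
    unfolding A B by (simp add: b_def)
qed

lemma not_in_spectrum:
  assumes ok: "iter_ok \<psi> M" and c: "cmod c > 1"
  shows "c \<notin> fock_spectrum (comp_op \<psi>)"
proof -
  have "fock_bounded (resolv \<psi> c)"
    unfolding fock_bounded_def
  proof (intro conjI ballI allI)
    show "\<And>f. f \<in> fock_space \<Longrightarrow> resolv \<psi> c f \<in> fock_space" by (rule resolv_in(1)[OF ok _ c])
    show "\<And>f g. f \<in> fock_space \<Longrightarrow> g \<in> fock_space \<Longrightarrow>
      resolv \<psi> c (\<lambda>z. f z + g z) = (\<lambda>z. resolv \<psi> c f z + resolv \<psi> c g z)"
      by (rule resolv_add[OF ok _ _ c])
    show "\<And>f d. f \<in> fock_space \<Longrightarrow> resolv \<psi> c (\<lambda>z. d * f z) = (\<lambda>z. d * resolv \<psi> c f z)"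
      by (rule resolv_scale[OF ok _ c])
    show "\<exists>K. \<forall>f\<in>fock_space. fock_norm (resolv \<psi> c f) \<le> K * fock_norm f"
      using resolv_in(2)[OF ok _ c] by blast
  qed
  moreover have "\<forall>f\<in>fock_space. resolv \<psi> c (\<lambda>z. comp_op \<psi> f z - c * f z) = f \<and>
      (\<lambda>z. comp_op \<psi> (resolv \<psi> c f) z - c * resolv \<psi> c f z) = f"
    using resolv_left[OF ok _ c] resolv_right[OF ok _ c] by blast
  ultimately have "fock_invertible (\<lambda>f z. comp_op \<psi> f z - c * f z)"
    unfolding fock_invertible_def by blast
  then show ?thesis by (simp add: fock_spectrum_def)
qed

lemma comp_op_const: "comp_op \<psi> (\<lambda>z. c) = (\<lambda>z. c)"
  by (simp add: comp_op_def)

lemma one_in_spectrum: "1 \<in> fock_spectrum (comp_op \<psi>)"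
proof -
  have "\<not> fock_invertible (\<lambda>f z. comp_op \<psi> f z - 1 * f z)"
  proof
    assume "fock_invertible (\<lambda>f z. comp_op \<psi> f z - 1 * f z)"
    then obtain S where S: "\<forall>f\<in>fock_space. S (\<lambda>z. comp_op \<psi> f z - 1 * f z) = f"
      unfolding fock_invertible_def by blast
    have "S (\<lambda>z. comp_op \<psi> (\<lambda>z. 1) z - 1 * 1) = (\<lambda>z. 1)"
      using S fock_space_const[of 1] by auto
    moreover have "S (\<lambda>z. comp_op \<psi> (\<lambda>z. 0) z - 1 * 0) = (\<lambda>z. 0)"
      using S fock_space_const[of 0] by auto
    ultimately have "(\<lambda>z::complex. 1::complex) = (\<lambda>z. 0)" by (simp add: comp_op_const)
    then show False by (metis zero_neq_one)
  qed
  then show ?thesis by (simp add: fock_spectrum_def)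
qed

lemma spectral_radius_one:
  assumes ok: "iter_ok \<psi> M"
  shows "fock_spectral_radius (comp_op \<psi>) = 1"
  unfolding fock_spectral_radius_def
proof (rule cSup_eq_maximum)
  show "1 \<in> cmod ` fock_spectrum (comp_op \<psi>)"
    using one_in_spectrum by force
  fix x assume "x \<in> cmod ` fock_spectrum (comp_op \<psi>)"
  then obtain c where c: "c \<in> fock_spectrum (comp_op \<psi>)" "x = cmod c" by blast
  show "x \<le> 1"
  proof (rule ccontr)
    assume "\<not> x \<le> 1"
    then have "cmod c > 1" using c by simp
    then show False using not_in_spectrum[OF ok] c by blast
  qed
qed

lemma fock_norm_one: "fock_norm (\<lambda>z. 1) = 1"
  by (simp add: fock_norm_def fock_weight_integral)

lemma opnorm_one:
  assumes "\<And>f. f \<in> fock_space \<Longrightarrow> fock_norm (T f) \<le> fock_norm f"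
    and "T (\<lambda>z. 1) = (\<lambda>z. 1)"
  shows "fock_opnorm T = 1"
  unfolding fock_opnorm_def
proof (rule cSup_eq_maximum)
  show "1 \<in> {fock_norm (T f) |f. f \<in> fock_space \<and> fock_norm f \<le> 1}"
    using assms(2) fock_space_const[of 1] fock_norm_one by force
  fix x assume "x \<in> {fock_norm (T f) |f. f \<in> fock_space \<and> fock_norm f \<le> 1}"
  then obtain f where "f \<in> fock_space" "fock_norm f \<le> 1" "x = fock_norm (T f)" by blast
  then show "x \<le> 1" using assms(1) by force
qed

lemma opnorm_gt_one:
  assumes b: "fock_bounded T" and g: "g \<in> fock_space" and gt: "fock_norm (T g) > fock_norm g" and g0: "fock_norm g > 0"
  shows "fock_opnorm T > 1"
proof -
  obtain K where K: "\<forall>f\<in>fock_space. fock_norm (T f) \<le> K * fock_norm f"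
    using b unfolding fock_bounded_def by blast
  have hom: "\<forall>f\<in>fock_space. \<forall>c. T (\<lambda>z. c * f z) = (\<lambda>z. c * T f z)"
    using b unfolding fock_bounded_def by blast
  define c where "c = complex_of_real (1 / fock_norm g)"
  define f where "f = (\<lambda>z. c * g z)"
  have f: "f \<in> fock_space" unfolding f_def by (rule fock_space_scale[OF g])
  have cc: "cmod c = 1 / fock_norm g" unfolding c_def using g0 by (simp add: norm_divide)
  have nf: "fock_norm f = 1" unfolding f_def fock_norm_scale cc using g0 by simp
  have Tf: "T f = (\<lambda>z. c * T g z)" using hom g by (simp add: f_def)
  have nTf: "fock_norm (T f) = fock_norm (T g) / fock_norm g"
    unfolding Tf fock_norm_scale cc using g0 by simp
  have gt1: "fock_norm (T f) > 1" using gt g0 by (simp add: nTf)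
  define X where "X = {fock_norm (T f) |f. f \<in> fock_space \<and> fock_norm f \<le> 1}"
  have mem: "fock_norm (T f) \<in> X" unfolding X_def using f nf by force
  have bdd: "bdd_above X"
  proof (rule bdd_aboveI)
    fix x assume "x \<in> X"
    then obtain h where h: "h \<in> fock_space" "fock_norm h \<le> 1" "x = fock_norm (T h)"
      unfolding X_def by blast
    have "x \<le> K * fock_norm h" using K h by simp
    also have "\<dots> \<le> \<bar>K\<bar> * fock_norm h" using fock_norm_nonneg[of h] by (simp add: mult_right_mono)
    also have "\<dots> \<le> \<bar>K\<bar>" using h(2) fock_norm_nonneg[of h] by (simp add: mult_left_le)
    finally show "x \<le> \<bar>K\<bar>" .
  qed
  have "fock_norm (T f) \<le> Sup X" by (rule cSup_upper[OF mem bdd])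
  then show ?thesis using gt1 by (simp add: fock_opnorm_def X_def[symmetric])
qed

lemma affine_iter: "((\<lambda>z. a * z + b) ^^ n) z = a ^ n * z + b * (\<Sum>k<n. a ^ k :: complex)"
proof (induction n)
  case 0 then show ?case by simp
next
  case (Suc n)
  have S: "(\<Sum>k<Suc n. a ^ k) = 1 + a * (\<Sum>k<n. a ^ k)"
    by (subst sum.lessThan_Suc_shift) (simp add: sum_distrib_left)
  show ?case unfolding S using Suc.IH by (simp add: algebra_simps)
qed

lemma dil_iter: "((\<lambda>z. a * z) ^^ n) z = a ^ n * (z :: complex)"
  by (induction n) (simp_all add: algebra_simps)

lemma iter_ok_dil:
  assumes a: "cmod a \<le> 1"
  shows "iter_ok (\<lambda>z. a * z) 1"
  unfolding iter_ok_def dil_iter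
proof (intro conjI allI impI)
  fix n f assume f: "f \<in> fock_space"
  have an: "cmod (a ^ n) \<le> 1" using a by (simp add: norm_power power_le_one)
  show "(\<lambda>z. f (a ^ n * z)) \<in> fock_space" by (rule dil_le1(1)[OF f an])
  show "fock_norm (\<lambda>z. f (a ^ n * z)) \<le> 1 * fock_norm f" using dil_le1(2)[OF f an] by simp
qed simp

lemma iter_ok_affine:
  assumes a: "cmod a < 1"
  shows "iter_ok (\<lambda>z. a * z + b) (max 1 (Mc (cmod a) (cmod b / (1 - cmod a))))"
  unfolding iter_ok_def affine_iter
proof (intro conjI allI impI)
  define M where "M = max 1 (Mc (cmod a) (cmod b / (1 - cmod a)))"
  fix n f assume f: "f \<in> fock_space"
  have "(\<lambda>z. f (a ^ n * z + b * (\<Sum>k<n. a ^ k))) \<in> fock_space \<and>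
        fock_norm (\<lambda>z. f (a ^ n * z + b * (\<Sum>k<n. a ^ k))) \<le> M * fock_norm f"
  proof (cases n)
    case 0
    have "1 * fock_norm f \<le> M * fock_norm f"
      using fock_norm_nonneg[of f] by (intro mult_right_mono) (auto simp: M_def)
    then show ?thesis using f 0 by simp
  next
    case (Suc m)
    have an: "cmod (a ^ n) \<le> cmod a"
    proof -
      have "cmod (a ^ n) = cmod a * cmod a ^ m" by (simp add: Suc norm_mult norm_power)
      also have "\<dots> \<le> cmod a * 1" using a by (intro mult_left_mono power_le_one) auto
      finally show ?thesis by simp
    qed
    have bn: "cmod (b * (\<Sum>k<n. a ^ k)) \<le> cmod b / (1 - cmod a)"
    proof -
      have "cmod (\<Sum>k<n. a ^ k) \<le> (\<Sum>k<n. cmod a ^ k)"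
        by (rule order_trans[OF norm_sum]) (simp add: norm_power)
      also have "\<dots> \<le> (\<Sum>k. cmod a ^ k)"
        using a by (intro sum_le_suminf summable_geometric) auto
      also have "\<dots> = 1 / (1 - cmod a)" using suminf_geometric[of "cmod a"] a by simp
      finally have "cmod (\<Sum>k<n. a ^ k) \<le> 1 / (1 - cmod a)" .
      then have "cmod b * cmod (\<Sum>k<n. a ^ k) \<le> cmod b * (1 / (1 - cmod a))"
        by (rule mult_left_mono) simp
      then show ?thesis by (simp add: norm_mult)
    qed
    note ca = comp_affine[OF f an a bn]
    have "Mc (cmod a) (cmod b / (1 - cmod a)) * fock_norm f \<le> M * fock_norm f"
      using fock_norm_nonneg[of f] by (intro mult_right_mono) (auto simp: M_def)
    then show ?thesis using ca by auto
  qed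
  then show "(\<lambda>z. f (a ^ n * z + b * (\<Sum>k<n. a ^ k))) \<in> fock_space"
    "fock_norm (\<lambda>z. f (a ^ n * z + b * (\<Sum>k<n. a ^ k))) \<le> max 1 (Mc (cmod a) (cmod b / (1 - cmod a))) * fock_norm f"
    by (auto simp: M_def)
qed simp

lemma comp_kern: "comp_op (\<lambda>z. a * z + b) (fkern v) = (\<lambda>z. exp (cnj v * b) * fkern (cnj a * v) z)"
  by (auto simp: comp_op_def fkern_def exp_add[symmetric] algebra_simps)

lemma fock_norm_comp_kern:
  "fock_norm (comp_op (\<lambda>z. a * z + b) (fkern v)) = exp (Re (cnj v * b)) * exp ((cmod a * cmod v)\<^sup>2 / 2)"
  unfolding comp_kern fock_norm_scale fkern_norm by (simp add: norm_exp_eq_Re norm_mult)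

lemma fock_inner_scale_right: "fock_inner f (\<lambda>z. c * g z) = cnj c * fock_inner f g"
proof -
  have "fock_inner f (\<lambda>z. c * g z) = (\<integral>z. cnj c * (f z * cnj (g z) * complex_of_real (fock_weight z)) \<partial>lborel)"
    unfolding fock_inner_def by (intro Bochner_Integration.integral_cong refl) (simp add: algebra_simps)
  also have "\<dots> = cnj c * fock_inner f g" unfolding fock_inner_def by (rule integral_mult_right_zero)
  finally show ?thesis .
qed

lemma adj_kern:
  assumes adj: "fock_adjoint (comp_op \<phi>) S" and maps: "\<And>g. g \<in> fock_space \<Longrightarrow> comp_op \<phi> g \<in> fock_space"
  shows "S (\<lambda>z. c * fkern u z) = (\<lambda>z. c * fkern (\<phi> u) z)"
proof (rule fock_ident)
  have h: "(\<lambda>z. c * fkern u z) \<in> fock_space" by (rule fock_space_scale[OF fkern_in])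
  show "S (\<lambda>z. c * fkern u z) \<in> fock_space" using adj h by (simp add: fock_adjoint_def)
  show "(\<lambda>z. c * fkern (\<phi> u) z) \<in> fock_space" by (rule fock_space_scale[OF fkern_in])
  fix g assume g: "g \<in> fock_space"
  have "fock_inner g (S (\<lambda>z. c * fkern u z)) = fock_inner (comp_op \<phi> g) (\<lambda>z. c * fkern u z)"
    using adj g h by (simp add: fock_adjoint_def)
  also have "\<dots> = cnj c * g (\<phi> u)"
    unfolding fock_inner_scale_right reproducing[OF maps[OF g]] by (simp add: comp_op_def)
  also have "\<dots> = fock_inner g (\<lambda>z. c * fkern (\<phi> u) z)"
    by (simp add: fock_inner_scale_right reproducing[OF g])
  finally show "fock_inner g (S (\<lambda>z. c * fkern u z)) = fock_inner g (\<lambda>z. c * fkern (\<phi> u) z)" .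
qed

lemma adj_kern1:
  assumes adj: "fock_adjoint (comp_op \<phi>) S" and maps: "\<And>g. g \<in> fock_space \<Longrightarrow> comp_op \<phi> g \<in> fock_space"
  shows "S (fkern u) = fkern (\<phi> u)"
  using adj_kern[OF adj maps, of 1 u] by simp

lemma case_b0:
  assumes a: "cmod a \<le> 1"
  shows "fock_bounded (comp_op (\<lambda>z. a * z))" "normaloid (comp_op (\<lambda>z. a * z))"
    "hyponormal (comp_op (\<lambda>z. a * z))" "cohyponormal (comp_op (\<lambda>z. a * z))"
proof -
  let ?T = "comp_op (\<lambda>z. a * z)"
  let ?S = "comp_op (\<lambda>z. cnj a * z)"
  have Tf: "?T f = (\<lambda>z. f (a * z))" for f by (simp add: comp_op_def)
  have Sf: "?S f = (\<lambda>z. f (cnj a * z))" for f by (simp add: comp_op_def)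
  have a': "cmod (cnj a) \<le> 1" using a by simp
  show "fock_bounded ?T"
    unfolding fock_bounded_def
  proof (intro conjI ballI allI)
    show "\<And>f. f \<in> fock_space \<Longrightarrow> ?T f \<in> fock_space" unfolding Tf by (rule dil_le1(1)[OF _ a])
    show "\<And>f g. ?T (\<lambda>z. f z + g z) = (\<lambda>z. ?T f z + ?T g z)" by (simp add: comp_op_def)
    show "\<And>f c. ?T (\<lambda>z. c * f z) = (\<lambda>z. c * ?T f z)" by (simp add: comp_op_def)
    show "\<exists>K. \<forall>f\<in>fock_space. fock_norm (?T f) \<le> K * fock_norm f"
      by (rule exI[of _ 1]) (simp add: Tf dil_le1(2)[OF _ a])
  qed
  show "normaloid ?T"
    unfolding normaloid_def
  proof -
    have "fock_opnorm ?T = 1"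
      by (rule opnorm_one) (simp_all add: Tf dil_le1(2)[OF _ a])
    moreover have "fock_spectral_radius ?T = 1"
      by (rule spectral_radius_one[OF iter_ok_dil[OF a]])
    ultimately show "fock_opnorm ?T = fock_spectral_radius ?T" by simp
  qed
  have adj: "fock_adjoint ?T ?S"
    unfolding fock_adjoint_def
  proof (intro conjI ballI)
    show "\<And>f. f \<in> fock_space \<Longrightarrow> ?S f \<in> fock_space" unfolding Sf by (rule dil_le1(1)[OF _ a'])
    show "\<And>f g. f \<in> fock_space \<Longrightarrow> g \<in> fock_space \<Longrightarrow> fock_inner (?T f) g = fock_inner f (?S g)"
      unfolding Tf Sf by (rule adj_le1[OF _ _ a])
  qed
  have comm: "(\<lambda>z. ?S (?T f) z - ?T (?S f) z) = (\<lambda>z. 0)" for f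
    by (simp add: comp_op_def mult.commute mult.left_commute)
  have comm': "(\<lambda>z. ?T (?S f) z - ?S (?T f) z) = (\<lambda>z. 0)" for f
    by (simp add: comp_op_def mult.commute mult.left_commute)
  show "hyponormal ?T"
    unfolding hyponormal_def fock_positive_def
    using adj by (intro exI[of _ ?S]) (simp add: comm)
  show "cohyponormal ?T"
    unfolding cohyponormal_def fock_positive_def
    using adj by (intro exI[of _ ?S]) (simp add: comm')
qed

lemma case_unbounded:
  assumes a: "cmod a = 1" and b: "b \<noteq> 0"
  shows "\<not> fock_bounded (comp_op (\<lambda>z. a * z + b))"
proof
  assume "fock_bounded (comp_op (\<lambda>z. a * z + b))"
  then obtain K where K: "\<forall>f\<in>fock_space. fock_norm (comp_op (\<lambda>z. a * z + b) f) \<le> K * fock_norm f"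
    unfolding fock_bounded_def by blast
  have b2: "(cmod b)\<^sup>2 > 0" using b by simp
  define t where "t = (\<bar>K\<bar> + 1) / (cmod b)\<^sup>2"
  define v where "v = complex_of_real t * b"
  have cv: "cnj v * b = complex_of_real (t * (cmod b)\<^sup>2)"
    by (simp add: v_def complex_norm_square mult.commute mult.left_commute del: of_real_power)
  have tb: "t * (cmod b)\<^sup>2 = \<bar>K\<bar> + 1" using b2 by (simp add: t_def)
  have "fock_norm (comp_op (\<lambda>z. a * z + b) (fkern v)) = exp (\<bar>K\<bar> + 1) * fock_norm (fkern v)"
    unfolding fock_norm_comp_kern fkern_norm cv tb using a by simp
  moreover have "fock_norm (comp_op (\<lambda>z. a * z + b) (fkern v)) \<le> K * fock_norm (fkern v)"
    using K fkern_in by blast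
  moreover have "fock_norm (fkern v) > 0" by (simp add: fkern_norm)
  ultimately have "exp (\<bar>K\<bar> + 1) \<le> K" by simp
  moreover have "1 + (\<bar>K\<bar> + 1) \<le> exp (\<bar>K\<bar> + 1)" by (rule exp_ge_add_one_self)
  ultimately show False by linarith
qed

lemma case_lt1:
  assumes a: "cmod a < 1" and b: "b \<noteq> 0" and bd: "fock_bounded (comp_op (\<lambda>z. a * z + b))"
  shows "\<not> normaloid (comp_op (\<lambda>z. a * z + b))"
    "\<not> hyponormal (comp_op (\<lambda>z. a * z + b))"
    "\<not> cohyponormal (comp_op (\<lambda>z. a * z + b))"
proof -
  let ?\<phi> = "\<lambda>z. a * z + b"
  let ?T = "comp_op ?\<phi>"
  have maps: "\<And>g. g \<in> fock_space \<Longrightarrow> ?T g \<in> fock_space"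
    using bd unfolding fock_bounded_def by blast
  have b2: "(cmod b)\<^sup>2 > 0" using b by simp
  have "fock_opnorm ?T > 1"
  proof (rule opnorm_gt_one[OF bd fkern_in])
    have cb: "Re (cnj b * b) = (cmod b)\<^sup>2"
      unfolding cmod_power2 by (simp add: power2_eq_square)
    have "fock_norm (fkern b) = exp ((cmod b)\<^sup>2 / 2)" by (rule fkern_norm)
    also have "\<dots> < exp ((cmod b)\<^sup>2)" using b2 by simp
    also have "\<dots> \<le> exp ((cmod b)\<^sup>2) * exp ((cmod a * cmod b)\<^sup>2 / 2)" by simp
    also have "\<dots> = fock_norm (?T (fkern b))" unfolding fock_norm_comp_kern cb ..
    finally show "fock_norm (?T (fkern b)) > fock_norm (fkern b)" .
    show "fock_norm (fkern b) > 0" by (simp add: fkern_norm)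
  qed
  moreover have "fock_spectral_radius ?T = 1"
    by (rule spectral_radius_one[OF iter_ok_affine[OF a]])
  ultimately show "\<not> normaloid ?T" by (simp add: normaloid_def)
  show "\<not> hyponormal ?T"
  proof
    assume "hyponormal ?T"
    then obtain S where adj: "fock_adjoint ?T S" and pos: "fock_positive (\<lambda>f z. S (?T f) z - ?T (S f) z)"
      unfolding hyponormal_def by blast
    have T0: "?T (fkern 0) = fkern 0" by (simp add: comp_op_def fkern_def)
    have S0: "S (fkern 0) = fkern b" using adj_kern1[OF adj maps, of 0] by simp
    have h: "(\<lambda>z. fkern b z - ?T (fkern b) z) \<in> fock_space"
      by (rule fock_space_diff[OF fkern_in maps[OF fkern_in]])
    have "fock_inner (\<lambda>z. S (?T (fkern 0)) z - ?T (S (fkern 0)) z) (fkern 0)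
        = fock_inner (\<lambda>z. fkern b z - ?T (fkern b) z) (fkern 0)" by (simp only: T0 S0)
    also have "\<dots> = fkern b 0 - ?T (fkern b) 0" by (rule reproducing[OF h])
    also have "\<dots> = 1 - exp (cnj b * b)" by (simp add: fkern_def comp_op_def)
    also have "\<dots> = complex_of_real (1 - exp ((cmod b)\<^sup>2))"
    proof -
      have "cnj b * b = complex_of_real ((cmod b)\<^sup>2)" by (metis complex_norm_square mult.commute)
      then show ?thesis by (simp only: exp_of_real of_real_diff of_real_1)
    qed
    finally have v: "fock_inner (\<lambda>z. S (?T (fkern 0)) z - ?T (S (fkern 0)) z) (fkern 0) = complex_of_real (1 - exp ((cmod b)\<^sup>2))" .
    have "0 \<le> Re (fock_inner (\<lambda>z. S (?T (fkern 0)) z - ?T (S (fkern 0)) z) (fkern 0))"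
      using pos fkern_in[of 0] unfolding fock_positive_def by blast
    then have "0 \<le> 1 - exp ((cmod b)\<^sup>2)" unfolding v by simp
    moreover have "exp ((cmod b)\<^sup>2) > 1" using b2 by simp
    ultimately show False by simp
  qed
  show "\<not> cohyponormal ?T"
  proof
    assume "cohyponormal ?T"
    then obtain S where adj: "fock_adjoint ?T S" and pos: "fock_positive (\<lambda>f z. ?T (S f) z - S (?T f) z)"
      unfolding cohyponormal_def by blast
    have a1: "a \<noteq> 1" using a by auto
    define p where "p = b / (1 - a)"
    have bp: "b = p * (1 - a)" using a1 by (simp add: p_def)
    have p0: "p \<noteq> 0" using b bp by auto
    define r where "r = (cmod p)\<^sup>2"
    have r0: "r > 0" using p0 by (simp add: r_def)
    have pr: "p * cnj p = complex_of_real r"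
      unfolding r_def using complex_norm_square[of p] by (simp del: of_real_power)
    have fixp: "?\<phi> p = p" using a1 by (simp add: p_def field_simps)
    define c where "c = exp (cnj p * b)"
    define u where "u = cnj a * p"
    have SK: "S (fkern p) = fkern p" using adj_kern1[OF adj maps, of p] fixp by simp
    have TK: "?T (fkern p) = (\<lambda>z. c * fkern u z)" unfolding comp_kern c_def u_def ..
    have STK: "S (\<lambda>z. c * fkern u z) = (\<lambda>z. c * fkern (?\<phi> u) z)" by (rule adj_kern[OF adj maps])
    have h: "(\<lambda>z. c * fkern u z - c * fkern (?\<phi> u) z) \<in> fock_space"
      by (intro fock_space_diff fock_space_scale fkern_in)
    define s where "s = 1 + (cmod (1 - a))\<^sup>2"
    have s1: "s > 1" using a1 by (simp add: s_def)
    have e1: "cnj p * b + cnj u * p = complex_of_real r"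
    proof -
      have "cnj p * b + cnj u * p = p * cnj p" unfolding bp u_def by (simp add: algebra_simps)
      then show ?thesis using pr by simp
    qed
    have e2: "cnj p * b + cnj (?\<phi> u) * p = complex_of_real (r * s)"
    proof -
      have q: "complex_of_real ((cmod (1 - a))\<^sup>2) = (1 - a) * cnj (1 - a)"
        by (rule complex_norm_square)
      have "cnj p * b + cnj (?\<phi> u) * p = (p * cnj p) * (1 + (1 - a) * cnj (1 - a))"
        unfolding bp u_def by (simp add: algebra_simps)
      also have "\<dots> = complex_of_real r * complex_of_real s"
        unfolding pr s_def q[symmetric] by simp
      finally show ?thesis by simp
    qed
    have "fock_inner (\<lambda>z. ?T (S (fkern p)) z - S (?T (fkern p)) z) (fkern p)
        = fock_inner (\<lambda>z. c * fkern u z - c * fkern (?\<phi> u) z) (fkern p)"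
      by (simp only: SK STK TK)
    also have "\<dots> = c * fkern u p - c * fkern (?\<phi> u) p" by (rule reproducing[OF h])
    also have "\<dots> = exp (cnj p * b + cnj u * p) - exp (cnj p * b + cnj (?\<phi> u) * p)"
      by (simp only: c_def fkern_def exp_add)
    also have "\<dots> = complex_of_real (exp r - exp (r * s))"
      unfolding e1 e2 by (simp only: exp_of_real of_real_diff)
    finally have v: "fock_inner (\<lambda>z. ?T (S (fkern p)) z - S (?T (fkern p)) z) (fkern p) = complex_of_real (exp r - exp (r * s))" .
    have "0 \<le> Re (fock_inner (\<lambda>z. ?T (S (fkern p)) z - S (?T (fkern p)) z) (fkern p))"
      using pos fkern_in[of p] unfolding fock_positive_def by blast
    then have "0 \<le> exp r - exp (r * s)" unfolding v by simp
    moreover have "r < r * s" using r0 s1 by simp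
    then have "exp r < exp (r * s)" by simp
    ultimately show False by simp
  qed
qed

theorem proposition2p2:
  fixes a b :: complex
  assumes "cmod a \<le> 1"
  shows "((fock_bounded (comp_op (\<lambda>z. a * z + b)) \<and> normaloid (comp_op (\<lambda>z. a * z + b)))
            \<longleftrightarrow> b = 0)
       \<and> ((fock_bounded (comp_op (\<lambda>z. a * z + b)) \<and> hyponormal (comp_op (\<lambda>z. a * z + b)))
            \<longleftrightarrow> b = 0)
       \<and> ((fock_bounded (comp_op (\<lambda>z. a * z + b)) \<and> cohyponormal (comp_op (\<lambda>z. a * z + b)))
            \<longleftrightarrow> b = 0)"
proof (cases "b = 0")
  case True
  have e: "(\<lambda>z. a * z + b) = (\<lambda>z. a * z)" using True by simp
  show ?thesis unfolding e using case_b0[OF assms] True by simp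
next
  case False
  show ?thesis
  proof (cases "cmod a = 1")
    case True
    then show ?thesis using case_unbounded[OF True False] False by simp
  next
    case a1: False
    have lt: "cmod a < 1" using assms a1 by simp
    show ?thesis using case_lt1[OF lt False] False by blast
  qed
qed

end
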